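(* Let $a\in\mathbb{C}^*$, $s,t\ge0$ with $n=s+t\ge1$, and $A=\mathrm{diag}(a,\dots,a,-a,\dots,-a)$ with $s$ entries $a$ and $t$ entries $-a$. Then for every $B\in M_n(\mathbb{C})$ with $AB+BA=0$: (1) $\mathrm{rank}(B)\le2\min(s,t)$; (2) $(A,B)\in\mathscr{Z}_{\min(s,t),\,|s-t|,\,0}$.
   Context: For $(p,m,r)\in\mathbb{Z}_{\ge0}^3$ with $2p+m+r=n$, $\mathscr{Z}_{p,m,r}$ denotes the Zariski closure, in $\mathscr{Z}_n=\{(A,B)\in M_n(\mathbb{C})^2 : AB+BA=0\}$, of the union of the $GL_n$-orbits (simultaneous conjugation) of all pairs $(A,B)\in\mathscr{Z}_n$ with $A=\mathrm{diag}(a_1,-a_1,\dots,a_p,-a_p,a_{p+1},\dots,a_{p+m},0,\dots,0)$ ($r$ zeros), $a_i\in\mathbb{C}^*$, $a_i\ne\pm a_j$ for $i\ne j$. *)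

theory Defs
  imports "Jordan_Normal_Form.DL_Rank"
begin

definition anticomm_var :: "nat \<Rightarrow> (complex mat \<times> complex mat) set" where
  "anticomm_var n = {(A,B). A \<in> carrier_mat n n \<and> B \<in> carrier_mat n n \<and>
                          A * B + B * A = 0\<^sub>m n n}"

inductive_set poly_fun :: "nat \<Rightarrow> (complex mat \<times> complex mat \<Rightarrow> complex) set"
  for n :: nat where
  pf_const: "(\<lambda>_. c) \<in> poly_fun n"
| pf_left:  "i < n \<Longrightarrow> j < n \<Longrightarrow> (\<lambda>(A,B). A $$ (i,j)) \<in> poly_fun n"
| pf_right: "i < n \<Longrightarrow> j < n \<Longrightarrow> (\<lambda>(A,B). B $$ (i,j)) \<in> poly_fun n"
| pf_add: "f \<in> poly_fun n \<Longrightarrow> g \<in> poly_fun n \<Longrightarrow> (\<lambda>x. f x + g x) \<in> poly_fun n"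
| pf_mult: "f \<in> poly_fun n \<Longrightarrow> g \<in> poly_fun n \<Longrightarrow> (\<lambda>x. f x * g x) \<in> poly_fun n"

definition zariski_closure_in :: "nat \<Rightarrow> (complex mat \<times> complex mat) set \<Rightarrow> (complex mat \<times> complex mat) set" where
  "zariski_closure_in n S = {x \<in> anticomm_var n.
      \<forall>f \<in> poly_fun n. (\<forall>y \<in> S. f y = 0) \<longrightarrow> f x = 0}"

definition gl_orbit :: "nat \<Rightarrow> complex mat \<times> complex mat \<Rightarrow> (complex mat \<times> complex mat) set" where
  "gl_orbit n X = {(P * fst X * Q, P * snd X * Q) | P Q.
      P \<in> carrier_mat n n \<and> Q \<in> carrier_mat n n \<and> P * Q = 1\<^sub>m n \<and> Q * P = 1\<^sub>m n}"

text \<open>The diagonal matrix diag(a_1,-a_1,...,a_p,-a_p,a_{p+1},...,a_{p+m},0,...,0),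
  with a indexed from 0 (a 0 = a_1, ...).\<close>
definition gen_diag :: "nat \<Rightarrow> nat \<Rightarrow> nat \<Rightarrow> (nat \<Rightarrow> complex) \<Rightarrow> complex mat" where
  "gen_diag p m r a = mat (2*p+m+r) (2*p+m+r) (\<lambda>(i,j).
     if i \<noteq> j then 0
     else if i < 2*p then (if even i then a (i div 2) else - a (i div 2))
     else if i < 2*p+m then a (i - p)
     else 0)"

definition generic_params :: "nat \<Rightarrow> nat \<Rightarrow> (nat \<Rightarrow> complex) \<Rightarrow> bool" where
  "generic_params p m a \<longleftrightarrow> (\<forall>i < p+m. a i \<noteq> 0) \<and>
     (\<forall>i < p+m. \<forall>j < p+m. i \<noteq> j \<longrightarrow> a i \<noteq> a j \<and> a i \<noteq> - a j)"

definition Zpmr :: "nat \<Rightarrow> nat \<Rightarrow> nat \<Rightarrow> (complex mat \<times> complex mat) set" where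
  "Zpmr p m r = (let n = 2*p+m+r in
     zariski_closure_in n (\<Union> {gl_orbit n (gen_diag p m r a, B) | a B.
        generic_params p m a \<and> (gen_diag p m r a, B) \<in> anticomm_var n}))"

end

theory Submission
  imports Defs "Jordan_Normal_Form.Jordan_Normal_Form_Existence"
begin


lemma pf_sum:
  assumes "finite K" "\<And>k. k \<in> K \<Longrightarrow> g k \<in> poly_fun n"
  shows "(\<lambda>x. \<Sum>k\<in>K. g k x) \<in> poly_fun n"
  using assms
proof (induction K rule: finite_induct)
  case empty
  then show ?case using poly_fun.pf_const[of 0 n] by simp
next
  case (insert k K)
  have "(\<lambda>x. \<Sum>k\<in>insert k K. g k x) = (\<lambda>x. g k x + (\<Sum>k\<in>K. g k x))"
    using insert by simp
  then show ?case using insert poly_fun.pf_add by auto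
qed

lemma pf_fst: "i < n \<Longrightarrow> j < n \<Longrightarrow> (\<lambda>x. fst x $$ (i,j)) \<in> poly_fun n"
proof -
  assume "i < n" "j < n"
  hence "(\<lambda>(A,B). A $$ (i,j)) \<in> poly_fun n" by (rule poly_fun.pf_left)
  moreover have "(\<lambda>(A::complex mat,B::complex mat). A $$ (i,j)) = (\<lambda>x. fst x $$ (i,j))" by auto
  ultimately show ?thesis by simp
qed

lemma pf_snd: "i < n \<Longrightarrow> j < n \<Longrightarrow> (\<lambda>x. snd x $$ (i,j)) \<in> poly_fun n"
proof -
  assume "i < n" "j < n"
  hence "(\<lambda>(A,B). B $$ (i,j)) \<in> poly_fun n" by (rule poly_fun.pf_right)
  moreover have "(\<lambda>(A::complex mat,B::complex mat). B $$ (i,j)) = (\<lambda>x. snd x $$ (i,j))" by auto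
  ultimately show ?thesis by simp
qed

lemma pf_smult_r: "f \<in> poly_fun n \<Longrightarrow> (\<lambda>x. f x * c) \<in> poly_fun n"
  using poly_fun.pf_mult[OF _ poly_fun.pf_const] by blast

lemma pf_smult: "f \<in> poly_fun n \<Longrightarrow> (\<lambda>x. c * f x) \<in> poly_fun n"
  using poly_fun.pf_mult[OF poly_fun.pf_const] by blast

lemma entry_conj:
  assumes "P \<in> carrier_mat n n" "A \<in> carrier_mat n n" "Q \<in> carrier_mat n n" "i < n" "j < n"
  shows "(P * A * Q) $$ (i,j) = (\<Sum>l\<in>{0..<n}. (\<Sum>k\<in>{0..<n}. P $$ (i,k) * A $$ (k,l)) * Q $$ (l,j))"
proof -
  have "(P * A * Q) $$ (i,j) = (\<Sum>k\<in>{0..<n}. P $$ (i,k) * (\<Sum>l\<in>{0..<n}. A $$ (k,l) * Q $$ (l,j)))"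
    using assms by (simp add: scalar_prod_def)
  also have "\<dots> = (\<Sum>l\<in>{0..<n}. (\<Sum>k\<in>{0..<n}. P $$ (i,k) * A $$ (k,l)) * Q $$ (l,j))"
    by (simp add: sum_distrib_left sum_distrib_right mult.assoc, rule sum.swap)
  finally show ?thesis .
qed

lemma pf_entry_conj:
  assumes "P \<in> carrier_mat n n" "Q \<in> carrier_mat n n"
  shows "(\<lambda>x. \<Sum>l\<in>{0..<n}. (\<Sum>k\<in>{0..<n}. P $$ (i,k) * fst x $$ (k,l)) * Q $$ (l,j)) \<in> poly_fun n"
    "(\<lambda>x. \<Sum>l\<in>{0..<n}. (\<Sum>k\<in>{0..<n}. P $$ (i,k) * snd x $$ (k,l)) * Q $$ (l,j)) \<in> poly_fun n"
proof -
  show "(\<lambda>x. \<Sum>l\<in>{0..<n}. (\<Sum>k\<in>{0..<n}. P $$ (i,k) * fst x $$ (k,l)) * Q $$ (l,j)) \<in> poly_fun n"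
    apply (rule pf_sum, simp)
    apply (rule pf_smult_r)
    apply (rule pf_sum, simp)
    apply (rule pf_smult)
    by (rule pf_fst, auto)
  show "(\<lambda>x. \<Sum>l\<in>{0..<n}. (\<Sum>k\<in>{0..<n}. P $$ (i,k) * snd x $$ (k,l)) * Q $$ (l,j)) \<in> poly_fun n"
    apply (rule pf_sum, simp)
    apply (rule pf_smult_r)
    apply (rule pf_sum, simp)
    apply (rule pf_smult)
    by (rule pf_snd, auto)
qed

lemma poly_fun_conj:
  assumes "f \<in> poly_fun n" "P \<in> carrier_mat n n" "Q \<in> carrier_mat n n"
  shows "\<exists>h \<in> poly_fun n. \<forall>A B. A \<in> carrier_mat n n \<longrightarrow> B \<in> carrier_mat n n \<longrightarrow>
           f (P * A * Q, P * B * Q) = h (A, B)"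
  using assms(1)
proof (induction rule: poly_fun.induct)
  case (pf_const c)
  show ?case by (rule bexI[of _ "\<lambda>_. c"], simp, rule poly_fun.pf_const)
next
  case (pf_left i j)
  show ?case
  proof (rule bexI[of _ "\<lambda>x. \<Sum>l\<in>{0..<n}. (\<Sum>k\<in>{0..<n}. P $$ (i,k) * fst x $$ (k,l)) * Q $$ (l,j)"])
    show "(\<lambda>x. \<Sum>l\<in>{0..<n}. (\<Sum>k\<in>{0..<n}. P $$ (i,k) * fst x $$ (k,l)) * Q $$ (l,j)) \<in> poly_fun n"
      by (rule pf_entry_conj(1)[OF assms(2,3)])
    show "\<forall>A B. A \<in> carrier_mat n n \<longrightarrow> B \<in> carrier_mat n n \<longrightarrow>
           (\<lambda>(A, B). A $$ (i, j)) (P * A * Q, P * B * Q) = 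
           (\<lambda>x. \<Sum>l\<in>{0..<n}. (\<Sum>k\<in>{0..<n}. P $$ (i,k) * fst x $$ (k,l)) * Q $$ (l,j)) (A, B)"
      using entry_conj[OF assms(2) _ assms(3) pf_left] by simp
  qed
next
  case (pf_right i j)
  show ?case
  proof (rule bexI[of _ "\<lambda>x. \<Sum>l\<in>{0..<n}. (\<Sum>k\<in>{0..<n}. P $$ (i,k) * snd x $$ (k,l)) * Q $$ (l,j)"])
    show "(\<lambda>x. \<Sum>l\<in>{0..<n}. (\<Sum>k\<in>{0..<n}. P $$ (i,k) * snd x $$ (k,l)) * Q $$ (l,j)) \<in> poly_fun n"
      by (rule pf_entry_conj(2)[OF assms(2,3)])
    show "\<forall>A B. A \<in> carrier_mat n n \<longrightarrow> B \<in> carrier_mat n n \<longrightarrow>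
           (\<lambda>(A, B). B $$ (i, j)) (P * A * Q, P * B * Q) = 
           (\<lambda>x. \<Sum>l\<in>{0..<n}. (\<Sum>k\<in>{0..<n}. P $$ (i,k) * snd x $$ (k,l)) * Q $$ (l,j)) (A, B)"
      using entry_conj[OF assms(2) _ assms(3) pf_right] by simp
  qed
next
  case (pf_add f g)
  from pf_add.IH(1) obtain h1 where h1: "h1 \<in> poly_fun n"
    "\<forall>A B. A \<in> carrier_mat n n \<longrightarrow> B \<in> carrier_mat n n \<longrightarrow> f (P * A * Q, P * B * Q) = h1 (A, B)"
    by blast
  from pf_add.IH(2) obtain h2 where h2: "h2 \<in> poly_fun n"
    "\<forall>A B. A \<in> carrier_mat n n \<longrightarrow> B \<in> carrier_mat n n \<longrightarrow> g (P * A * Q, P * B * Q) = h2 (A, B)"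
    by blast
  show ?case
  proof (rule bexI[of _ "\<lambda>x. h1 x + h2 x"])
    show "(\<lambda>x. h1 x + h2 x) \<in> poly_fun n" using h1(1) h2(1) by (rule poly_fun.pf_add)
    show "\<forall>A B. A \<in> carrier_mat n n \<longrightarrow> B \<in> carrier_mat n n \<longrightarrow>
     (\<lambda>x. f x + g x) (P * A * Q, P * B * Q) = (\<lambda>x. h1 x + h2 x) (A, B)"
      using h1(2) h2(2) by simp
  qed
next
  case (pf_mult f g)
  from pf_mult.IH(1) obtain h1 where h1: "h1 \<in> poly_fun n"
    "\<forall>A B. A \<in> carrier_mat n n \<longrightarrow> B \<in> carrier_mat n n \<longrightarrow> f (P * A * Q, P * B * Q) = h1 (A, B)"
    by blast
  from pf_mult.IH(2) obtain h2 where h2: "h2 \<in> poly_fun n"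
    "\<forall>A B. A \<in> carrier_mat n n \<longrightarrow> B \<in> carrier_mat n n \<longrightarrow> g (P * A * Q, P * B * Q) = h2 (A, B)"
    by blast
  show ?case
  proof (rule bexI[of _ "\<lambda>x. h1 x * h2 x"])
    show "(\<lambda>x. h1 x * h2 x) \<in> poly_fun n" using h1(1) h2(1) by (rule poly_fun.pf_mult)
    show "\<forall>A B. A \<in> carrier_mat n n \<longrightarrow> B \<in> carrier_mat n n \<longrightarrow>
     (\<lambda>x. f x * g x) (P * A * Q, P * B * Q) = (\<lambda>x. h1 x * h2 x) (A, B)"
      using h1(2) h2(2) by simp
  qed
qed
lemma poly_fun_line:
  assumes "f \<in> poly_fun n" "A0 \<in> carrier_mat n n" "A1 \<in> carrier_mat n n"
    "B0 \<in> carrier_mat n n" "B1 \<in> carrier_mat n n"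
  shows "\<exists>p. \<forall>z. f (A0 + z \<cdot>\<^sub>m A1, B0 + z \<cdot>\<^sub>m B1) = poly p z"
  using assms(1)
proof (induction rule: poly_fun.induct)
  case (pf_const c)
  then show ?case by (intro exI[of _ "[:c:]"], auto)
next
  case (pf_left i j)
  then show ?case using assms
    by (intro exI[of _ "[:A0 $$ (i,j), A1 $$ (i,j):]"], auto)
next
  case (pf_right i j)
  then show ?case using assms
    by (intro exI[of _ "[:B0 $$ (i,j), B1 $$ (i,j):]"], auto)
next
  case (pf_add f g)
  then obtain p q where "\<forall>z. f (A0 + z \<cdot>\<^sub>m A1, B0 + z \<cdot>\<^sub>m B1) = poly p z"
    "\<forall>z. g (A0 + z \<cdot>\<^sub>m A1, B0 + z \<cdot>\<^sub>m B1) = poly q z" by blast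
  then show ?case by (intro exI[of _ "p + q"], auto)
next
  case (pf_mult f g)
  then obtain p q where "\<forall>z. f (A0 + z \<cdot>\<^sub>m A1, B0 + z \<cdot>\<^sub>m B1) = poly p z"
    "\<forall>z. g (A0 + z \<cdot>\<^sub>m A1, B0 + z \<cdot>\<^sub>m B1) = poly q z" by blast
  then show ?case by (intro exI[of _ "p * q"], auto)
qed

lemma line_at_0: "A0 \<in> carrier_mat n n \<Longrightarrow> A1 \<in> carrier_mat n n \<Longrightarrow> A0 + (0::complex) \<cdot>\<^sub>m A1 = A0"
  by (intro eq_matI, auto)

lemma zc_curve:
  assumes "A0 \<in> carrier_mat n n" "A1 \<in> carrier_mat n n"
    "B0 \<in> carrier_mat n n" "B1 \<in> carrier_mat n n"
    "(A0, B0) \<in> anticomm_var n"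
    "infinite {z. (A0 + z \<cdot>\<^sub>m A1, B0 + z \<cdot>\<^sub>m B1) \<in> zariski_closure_in n S}"
  shows "(A0, B0) \<in> zariski_closure_in n S"
  unfolding zariski_closure_in_def
proof (intro CollectI conjI ballI impI)
  show "(A0, B0) \<in> anticomm_var n" by fact
  fix f assume f: "f \<in> poly_fun n" and van: "\<forall>y\<in>S. f y = 0"
  obtain p where p: "\<forall>z. f (A0 + z \<cdot>\<^sub>m A1, B0 + z \<cdot>\<^sub>m B1) = poly p z"
    using poly_fun_line[OF f assms(1-4)] by blast
  have "{z. (A0 + z \<cdot>\<^sub>m A1, B0 + z \<cdot>\<^sub>m B1) \<in> zariski_closure_in n S} \<subseteq> {z. poly p z = 0}"
  proof
    fix z assume "z \<in> {z. (A0 + z \<cdot>\<^sub>m A1, B0 + z \<cdot>\<^sub>m B1) \<in> zariski_closure_in n S}"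
    hence "f (A0 + z \<cdot>\<^sub>m A1, B0 + z \<cdot>\<^sub>m B1) = 0"
      using f van unfolding zariski_closure_in_def by blast
    thus "z \<in> {z. poly p z = 0}" using p by simp
  qed
  hence "infinite {z. poly p z = 0}" using assms(6) finite_subset by blast
  hence "p = 0" using poly_roots_finite by blast
  then show "f (A0, B0) = 0" using p[rule_format, of 0] line_at_0 assms by simp
qed

lemma conj_mult:
  fixes P Q A B :: "complex mat"
  assumes "P \<in> carrier_mat n n" "Q \<in> carrier_mat n n" "Q * P = 1\<^sub>m n"
    "A \<in> carrier_mat n n" "B \<in> carrier_mat n n"
  shows "(P * A * Q) * (P * B * Q) = P * (A * B) * Q"
proof -
  have QP: "Q * (P * X) = X" if X: "X \<in> carrier_mat n n" for X :: "complex mat"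
    using assms X by (simp add: assoc_mult_mat[of Q n n P n X n, symmetric])
  have "(P * A * Q) * (P * B * Q) = P * (A * (Q * (P * (B * Q))))"
    using assms by (simp add: assoc_mult_mat[of _ n n _ n _ n])
  also have "\<dots> = P * (A * (B * Q))" using QP[of "B * Q"] assms by simp
  also have "\<dots> = P * (A * B) * Q" using assms by (simp add: assoc_mult_mat[of _ n n _ n _ n])
  finally show ?thesis .
qed

lemma conj_anticomm:
  assumes "P \<in> carrier_mat n n" "Q \<in> carrier_mat n n" "Q * P = 1\<^sub>m n"
    "(A, B) \<in> anticomm_var n"
  shows "(P * A * Q, P * B * Q) \<in> anticomm_var n"
proof -
  have A: "A \<in> carrier_mat n n" and B: "B \<in> carrier_mat n n" and AB: "A * B + B * A = 0\<^sub>m n n"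
    using assms(4) unfolding anticomm_var_def by auto
  have "(P * A * Q) * (P * B * Q) + (P * B * Q) * (P * A * Q) = P * (A * B) * Q + P * (B * A) * Q"
    using conj_mult[OF assms(1-3)] A B by simp
  also have "\<dots> = P * (A * B + B * A) * Q"
    using assms A B
    by (simp add: mult_add_distrib_mat[of P n n "A * B" n "B * A"] add_mult_distrib_mat[of "P * (A * B)" n n "P * (B * A)" Q n])
  also have "\<dots> = 0\<^sub>m n n" using AB assms by simp
  finally show ?thesis using assms A B unfolding anticomm_var_def by auto
qed

lemma zc_conj:
  assumes "x \<in> zariski_closure_in n S" "P \<in> carrier_mat n n" "Q \<in> carrier_mat n n"
    "P * Q = 1\<^sub>m n" "Q * P = 1\<^sub>m n" "S \<subseteq> anticomm_var n"
    "\<And>A B. (A, B) \<in> S \<Longrightarrow> (P * A * Q, P * B * Q) \<in> S"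
  shows "(P * fst x * Q, P * snd x * Q) \<in> zariski_closure_in n S"
proof -
  obtain A B where x: "x = (A, B)" by force
  have xa: "(A, B) \<in> anticomm_var n" using assms(1) x unfolding zariski_closure_in_def by auto
  hence AB: "A \<in> carrier_mat n n" "B \<in> carrier_mat n n" unfolding anticomm_var_def by auto
  show ?thesis unfolding x fst_conv snd_conv zariski_closure_in_def
  proof (intro CollectI conjI ballI impI)
    show "(P * A * Q, P * B * Q) \<in> anticomm_var n" using conj_anticomm[OF assms(2,3,5) xa] .
    fix f assume f: "f \<in> poly_fun n" and van: "\<forall>y\<in>S. f y = 0"
    obtain h where h: "h \<in> poly_fun n" and hf: "\<forall>A B. A \<in> carrier_mat n n \<longrightarrow> B \<in> carrier_mat n n \<longrightarrow>
           f (P * A * Q, P * B * Q) = h (A, B)" using poly_fun_conj[OF f assms(2,3)] by blast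
    have "\<forall>y\<in>S. h y = 0"
    proof
      fix y assume y: "y \<in> S"
      obtain C D where yCD: "y = (C, D)" by force
      have "(C, D) \<in> anticomm_var n" using y yCD assms(6) by auto
      hence "C \<in> carrier_mat n n" "D \<in> carrier_mat n n" unfolding anticomm_var_def by auto
      hence "h (C, D) = f (P * C * Q, P * D * Q)" using hf by simp
      also have "\<dots> = 0" using van assms(7) y yCD by blast
      finally show "h y = 0" using yCD by simp
    qed
    hence "h (A, B) = 0" using assms(1) h x unfolding zariski_closure_in_def by auto
    thus "f (P * A * Q, P * B * Q) = 0" using hf AB by auto
  qed
qed

lemma S_sub_closure:
  assumes "S \<subseteq> anticomm_var n" "x \<in> S"
  shows "x \<in> zariski_closure_in n S"
  using assms unfolding zariski_closure_in_def by auto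


lemma order_prod_distinct:
  fixes xs :: "complex list"
  assumes "distinct xs"
  shows "order a (\<Prod>x\<leftarrow>xs. [:- x, 1:]) = (if a \<in> set xs then 1 else 0)"
  using assms
proof (induction xs)
  case Nil
  then show ?case by (simp add: order_0I)
next
  case (Cons x xs)
  have nz: "(\<Prod>x\<leftarrow>xs. [:- x, 1:]) \<noteq> 0"
    by (auto simp: prod_list_zero_iff)
  have nz1: "[:- x, 1:] \<noteq> 0" by simp
  have nz2: "[:- x, 1:] * (\<Prod>x\<leftarrow>xs. [:- x, 1:]) \<noteq> 0" using nz nz1 by (metis mult_eq_0_iff)
  have "order a (\<Prod>x\<leftarrow>x # xs. [:- x, 1:]) = order a [:- x, 1:] + order a (\<Prod>x\<leftarrow>xs. [:- x, 1:])"
    using order_mult[OF nz2] by simp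
  also have "order a [:- x, 1:] = (if x = a then 1 else 0)"
    by (simp add: order_linear')
  finally show ?case using Cons by auto
qed

lemma sum_list_ones: "(\<forall>p\<in>set xs. fst p = (1::nat)) \<Longrightarrow> sum_list (map fst xs) = length xs"
  by (induction xs, auto)

lemma jordan_matrix_ones:
  assumes "\<forall>p\<in>set n_as. fst p = (1::nat)"
  shows "jordan_matrix n_as = mat (length n_as) (length n_as) (\<lambda>(i,j). if i = j then snd (n_as ! i) else (0::'a::{zero,one}))"
  using assms
proof (induction n_as)
  case Nil
  then show ?case by (intro eq_matI, auto simp: jordan_matrix_def)
next
  case (Cons p rest)
  obtain m a where p: "p = (m, a)" by force
  have m: "m = 1" using Cons.prems p by auto
  have L: "sum_list (map fst rest) = length rest" using Cons.prems sum_list_ones by auto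
  have IH: "jordan_matrix rest = mat (length rest) (length rest) (\<lambda>(i,j). if i = j then snd (rest ! i) else 0)"
    using Cons by auto
  show ?case unfolding p m jordan_matrix_Cons L IH
    by (intro eq_matI, auto simp: jordan_block_def nth_Cons')
qed

lemma tri_diag:
  fixes T :: "complex mat"
  assumes T: "T \<in> carrier_mat k k" and ut: "upper_triangular T"
    and dist: "\<forall>i<k. \<forall>j<k. i \<noteq> j \<longrightarrow> T $$ (i,i) \<noteq> T $$ (j,j)"
  shows "\<exists>R R' d. R \<in> carrier_mat k k \<and> R' \<in> carrier_mat k k \<and> R * R' = 1\<^sub>m k \<and> R' * R = 1\<^sub>m k \<and>
     T = R * mat k k (\<lambda>(i,j). if i = j then d i else 0) * R'"
proof -
  have cp: "char_poly T = (\<Prod>a\<leftarrow>diag_mat T. [:- a, 1:])"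
    using char_poly_upper_triangular[OF T ut] .
  obtain n_as where jnf: "jordan_nf T n_as" using jordan_nf_exists[OF T cp] by blast
  have dd: "diag_mat T = map (\<lambda>i. T $$ (i,i)) [0..<k]" using T
    by (auto simp: diag_mat_def)
  have inj: "inj_on (\<lambda>i. T $$ (i,i)) (set [0..<k])"
  proof (rule inj_onI)
    fix x y assume xy: "x \<in> set [0..<k]" "y \<in> set [0..<k]" "T $$ (x,x) = T $$ (y,y)"
    hence "x < k" "y < k" by auto
    thus "x = y" using dist xy(3) by blast
  qed
  have ddist: "distinct (diag_mat T)" unfolding dd distinct_map
    using inj by auto
  have ones: "\<forall>p\<in>set n_as. fst p = 1"
  proof
    fix p assume p: "p \<in> set n_as"
    obtain m a where pma: "p = (m, a)" by force
    have pin: "(m, a) \<in> set n_as" using p pma by simp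
    have "m \<le> order a (char_poly T)"
      using jordan_nf_block_size_order_bound[OF jnf pin] .
    also have "\<dots> \<le> 1" unfolding cp order_prod_distinct[OF ddist] by auto
    finally have "m \<le> 1" .
    moreover have "m \<noteq> 0" using jnf p pma unfolding jordan_nf_def by force
    ultimately show "fst p = 1" using pma by auto
  qed
  have sim: "similar_mat T (jordan_matrix n_as)" using jnf unfolding jordan_nf_def by auto
  then obtain P Q where wit: "similar_mat_wit T (jordan_matrix n_as) P Q"
    unfolding similar_mat_def by blast
  note w = similar_mat_witD2[OF T wit]
  have d1: "dim_row (jordan_matrix n_as) = length n_as"
    by (subst jordan_matrix_ones[OF ones], simp)
  have d2: "dim_row (jordan_matrix n_as) = k" using w(5) by (rule carrier_matD)
  have len: "length n_as = k" using d1 d2 by simp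
  have jm: "jordan_matrix n_as = mat k k (\<lambda>(i,j). if i = j then snd (n_as ! i) else 0)"
    using jordan_matrix_ones[OF ones] unfolding len .
  have eq: "T = P * mat k k (\<lambda>(i,j). if i = j then snd (n_as ! i) else 0) * Q"
    using w(3) unfolding jm .
  show ?thesis
    apply (rule exI[of _ P], rule exI[of _ Q], rule exI[of _ "\<lambda>i. snd (n_as ! i)"])
    using w(1,2,6,7) eq by blast
qed


definition cX :: "nat \<Rightarrow> nat \<Rightarrow> complex mat \<Rightarrow> complex mat \<Rightarrow> complex mat" where
  "cX t u X1 X3 = four_block_mat X1 (0\<^sub>m t 0) X3 (0\<^sub>m u 0)"

definition rY :: "nat \<Rightarrow> nat \<Rightarrow> complex mat \<Rightarrow> complex mat \<Rightarrow> complex mat" where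
  "rY t u Y1 Y2 = four_block_mat Y1 Y2 (0\<^sub>m 0 t) (0\<^sub>m 0 u)"

lemma mat_r0: "(M :: 'a :: zero mat) \<in> carrier_mat r 0 \<Longrightarrow> M = 0\<^sub>m r 0"
  by (intro eq_matI, auto)

lemma mat_0c: "(M :: 'a :: zero mat) \<in> carrier_mat 0 c \<Longrightarrow> M = 0\<^sub>m 0 c"
  by (intro eq_matI, auto)

lemma cX_carrier[simp]: "X1 \<in> carrier_mat t t \<Longrightarrow> cX t u X1 X3 \<in> carrier_mat (t+u) t"
  unfolding cX_def using four_block_carrier_mat[of X1 t t "0\<^sub>m u 0" u 0] by simp

lemma rY_carrier[simp]: "Y1 \<in> carrier_mat t t \<Longrightarrow> Y2 \<in> carrier_mat t u \<Longrightarrow> rY t u Y1 Y2 \<in> carrier_mat t (t+u)"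
  unfolding rY_def using four_block_carrier_mat[of Y1 t t "0\<^sub>m 0 u" 0 u] by simp

lemma split_X:
  assumes "X \<in> carrier_mat (t+u) t"
  shows "\<exists>X1 X3. X1 \<in> carrier_mat t t \<and> X3 \<in> carrier_mat u t \<and> X = cX t u X1 X3"
proof -
  obtain X1 X2 X3 X4 where sb: "split_block X t t = (X1, X2, X3, X4)" by (metis prod_cases4)
  have d: "dim_row X = t + u" "dim_col X = t + 0" using assms by auto
  note s = split_block[OF sb d]
  show ?thesis using s mat_r0[OF s(2)] mat_r0[OF s(4)] unfolding cX_def by auto
qed

lemma split_Y:
  assumes "Y \<in> carrier_mat t (t+u)"
  shows "\<exists>Y1 Y2. Y1 \<in> carrier_mat t t \<and> Y2 \<in> carrier_mat t u \<and> Y = rY t u Y1 Y2"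
proof -
  obtain Y1 Y2 Y3 Y4 where sb: "split_block Y t t = (Y1, Y2, Y3, Y4)" by (metis prod_cases4)
  have d: "dim_row Y = t + 0" "dim_col Y = t + u" using assms by auto
  note s = split_block[OF sb d]
  show ?thesis using s mat_0c[OF s(3)] mat_0c[OF s(4)] unfolding rY_def by auto
qed

lemma mult_fb_cX:
  assumes "Ga \<in> carrier_mat t t" "Gb \<in> carrier_mat t u" "Gc \<in> carrier_mat u t" "Gd \<in> carrier_mat u u"
    "X1 \<in> carrier_mat t t" "X3 \<in> carrier_mat u t"
  shows "four_block_mat Ga Gb Gc Gd * cX t u X1 X3 = cX t u (Ga * X1 + Gb * X3) (Gc * X1 + Gd * X3)"
proof -
  have "four_block_mat Ga Gb Gc Gd * cX t u X1 X3 =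
    four_block_mat (Ga * X1 + Gb * X3) (Ga * 0\<^sub>m t 0 + Gb * 0\<^sub>m u 0) (Gc * X1 + Gd * X3) (Gc * 0\<^sub>m t 0 + Gd * 0\<^sub>m u 0)"
    unfolding cX_def by (rule mult_four_block_mat, insert assms, auto)
  also have "\<dots> = cX t u (Ga * X1 + Gb * X3) (Gc * X1 + Gd * X3)"
    unfolding cX_def
    by (rule cong_four_block_mat[OF refl _ refl], rule mat_r0, insert assms, auto)+
  finally show ?thesis .
qed

lemma mult_rY_fb:
  assumes "Ga \<in> carrier_mat t t" "Gb \<in> carrier_mat t u" "Gc \<in> carrier_mat u t" "Gd \<in> carrier_mat u u"
    "Y1 \<in> carrier_mat t t" "Y2 \<in> carrier_mat t u"
  shows "rY t u Y1 Y2 * four_block_mat Ga Gb Gc Gd = rY t u (Y1 * Ga + Y2 * Gc) (Y1 * Gb + Y2 * Gd)"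
proof -
  have "rY t u Y1 Y2 * four_block_mat Ga Gb Gc Gd =
    four_block_mat (Y1 * Ga + Y2 * Gc) (Y1 * Gb + Y2 * Gd) (0\<^sub>m 0 t * Ga + 0\<^sub>m 0 u * Gc) (0\<^sub>m 0 t * Gb + 0\<^sub>m 0 u * Gd)"
    unfolding rY_def by (rule mult_four_block_mat, insert assms, auto)
  also have "\<dots> = rY t u (Y1 * Ga + Y2 * Gc) (Y1 * Gb + Y2 * Gd)"
    unfolding rY_def
    by (rule cong_four_block_mat[OF refl refl], (rule mat_0c, insert assms, auto)+)
  finally show ?thesis .
qed

lemma sq_as_fb: "(G :: complex mat) \<in> carrier_mat t t \<Longrightarrow> G = four_block_mat G (0\<^sub>m t 0) (0\<^sub>m 0 t) (0\<^sub>m 0 0)"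
  by (intro eq_matI, auto)

lemma mult_cX_sq:
  assumes "G \<in> carrier_mat t t" "X1 \<in> carrier_mat t t" "X3 \<in> carrier_mat u t"
  shows "cX t u X1 X3 * G = cX t u (X1 * G) (X3 * G)"
proof -
  have "cX t u X1 X3 * G = cX t u X1 X3 * four_block_mat G (0\<^sub>m t 0) (0\<^sub>m 0 t) (0\<^sub>m 0 0)"
    using sq_as_fb[OF assms(1)] by simp
  also have "\<dots> = four_block_mat (X1 * G + 0\<^sub>m t 0 * 0\<^sub>m 0 t) (X1 * 0\<^sub>m t 0 + 0\<^sub>m t 0 * 0\<^sub>m 0 0)
     (X3 * G + 0\<^sub>m u 0 * 0\<^sub>m 0 t) (X3 * 0\<^sub>m t 0 + 0\<^sub>m u 0 * 0\<^sub>m 0 0)"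
    unfolding cX_def by (rule mult_four_block_mat, insert assms, auto)
  also have "\<dots> = cX t u (X1 * G) (X3 * G)"
    unfolding cX_def using assms
    by (intro cong_four_block_mat; (rule eq_matI)?; auto simp: scalar_prod_def)
  finally show ?thesis .
qed

lemma mult_sq_rY:
  assumes "G \<in> carrier_mat t t" "Y1 \<in> carrier_mat t t" "Y2 \<in> carrier_mat t u"
  shows "G * rY t u Y1 Y2 = rY t u (G * Y1) (G * Y2)"
proof -
  have "G * rY t u Y1 Y2 = four_block_mat G (0\<^sub>m t 0) (0\<^sub>m 0 t) (0\<^sub>m 0 0) * rY t u Y1 Y2"
    using sq_as_fb[OF assms(1)] by simp
  also have "\<dots> = four_block_mat (G * Y1 + 0\<^sub>m t 0 * 0\<^sub>m 0 t) (G * Y2 + 0\<^sub>m t 0 * 0\<^sub>m 0 u)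
     (0\<^sub>m 0 t * Y1 + 0\<^sub>m 0 0 * 0\<^sub>m 0 t) (0\<^sub>m 0 t * Y2 + 0\<^sub>m 0 0 * 0\<^sub>m 0 u)"
    unfolding rY_def by (rule mult_four_block_mat, insert assms, auto)
  also have "\<dots> = rY t u (G * Y1) (G * Y2)"
    unfolding rY_def using assms
    by (intro cong_four_block_mat; (rule eq_matI)?; auto simp: scalar_prod_def)
  finally show ?thesis .
qed

lemma cX_line:
  assumes "X1 \<in> carrier_mat t t" "X3 \<in> carrier_mat u t" "X1' \<in> carrier_mat t t" "X3' \<in> carrier_mat u t"
  shows "cX t u X1 X3 + z \<cdot>\<^sub>m cX t u X1' X3' = cX t u (X1 + z \<cdot>\<^sub>m X1') (X3 + z \<cdot>\<^sub>m X3')"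
  unfolding cX_def using assms by (intro eq_matI, auto)

lemma rY_line:
  assumes "Y1 \<in> carrier_mat t t" "Y2 \<in> carrier_mat t u" "Y1' \<in> carrier_mat t t" "Y2' \<in> carrier_mat t u"
  shows "rY t u Y1 Y2 + z \<cdot>\<^sub>m rY t u Y1' Y2' = rY t u (Y1 + z \<cdot>\<^sub>m Y1') (Y2 + z \<cdot>\<^sub>m Y2')"
  unfolding rY_def using assms by (intro eq_matI, auto)


lemma det_inv:
  fixes A :: "complex mat"
  assumes A: "A \<in> carrier_mat n n" and d: "det A \<noteq> 0"
  shows "\<exists>B. B \<in> carrier_mat n n \<and> A * B = 1\<^sub>m n \<and> B * A = 1\<^sub>m n"
proof -
  have "A \<in> Units (ring_mat TYPE(complex) n ())" by (rule det_non_zero_imp_unit[OF A d])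
  thus ?thesis unfolding Units_def by (auto simp: ring_mat_simps)
qed

lemma bad_det_finite:
  fixes M :: "complex mat"
  assumes M: "M \<in> carrier_mat t t"
  shows "finite {z. det (M + z \<cdot>\<^sub>m 1\<^sub>m t) = 0}"
proof -
  have cp: "char_poly M \<noteq> 0" using degree_monic_char_poly[OF M] by auto
  have "{z. det (M + z \<cdot>\<^sub>m 1\<^sub>m t) = 0} \<subseteq> uminus ` {w. poly (char_poly M) w = 0}"
  proof
    fix z assume "z \<in> {z. det (M + z \<cdot>\<^sub>m 1\<^sub>m t) = 0}"
    hence dz: "det (M + z \<cdot>\<^sub>m 1\<^sub>m t) = 0" by simp
    have "char_matrix M (- z) = M + z \<cdot>\<^sub>m 1\<^sub>m t" using M unfolding char_matrix_def by simp
    hence "eigenvalue M (- z)" using eigenvalue_det[OF M] dz by simp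
    hence "poly (char_poly M) (- z) = 0" using eigenvalue_root_char_poly[OF M] by simp
    thus "z \<in> uminus ` {w. poly (char_poly M) w = 0}" by (intro image_eqI[of _ _ "- z"], auto)
  qed
  moreover have "finite (uminus ` {w. poly (char_poly M) w = 0})"
    using poly_roots_finite[OF cp] by simp
  ultimately show ?thesis using finite_subset by blast
qed

lemma infinite_compl: "finite (B :: complex set) \<Longrightarrow> {z. z \<notin> B} \<subseteq> S \<Longrightarrow> infinite S"
proof
  assume fin: "finite B" and sub: "{z. z \<notin> B} \<subseteq> S" and fS: "finite S"
  have "UNIV = B \<union> {z. z \<notin> B}" by auto
  hence "finite (UNIV :: complex set)" using fin fS sub finite_subset by (metis finite_Un)
  thus False using infinite_UNIV_char_0 by auto
qed


lemma add_uminus_zero_mat: "(A :: complex mat) \<in> carrier_mat nr nc \<Longrightarrow> A + - A = 0\<^sub>m nr nc"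
  by (intro eq_matI, auto)

lemma uminus_zero_mat_c[simp]: "(- 0\<^sub>m nr nc :: complex mat) = 0\<^sub>m nr nc"
  by (intro eq_matI, auto)

lemma ABS:
  fixes Good :: "complex mat \<Rightarrow> complex mat \<Rightarrow> bool" and t u :: nat
  assumes inv: "\<And>X Y G1 G1' G2 G2'. X \<in> carrier_mat (t+u) t \<Longrightarrow> Y \<in> carrier_mat t (t+u) \<Longrightarrow>
     G1 \<in> carrier_mat (t+u) (t+u) \<Longrightarrow> G1' \<in> carrier_mat (t+u) (t+u) \<Longrightarrow>
     G1 * G1' = 1\<^sub>m (t+u) \<Longrightarrow> G1' * G1 = 1\<^sub>m (t+u) \<Longrightarrow>
     G2 \<in> carrier_mat t t \<Longrightarrow> G2' \<in> carrier_mat t t \<Longrightarrow> G2 * G2' = 1\<^sub>m t \<Longrightarrow> G2' * G2 = 1\<^sub>m t \<Longrightarrow>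
     Good X Y \<Longrightarrow> Good (G1 * X * G2') (G2 * Y * G1')"
  and sparse: "\<And>x y. Good (mat (t+u) t (\<lambda>(i,j). if i = j then x i else 0))
                           (mat t (t+u) (\<lambda>(i,j). if i = j then y i else 0))"
  and line: "\<And>X0 X1 Y0 Y1. X0 \<in> carrier_mat (t+u) t \<Longrightarrow> X1 \<in> carrier_mat (t+u) t \<Longrightarrow>
     Y0 \<in> carrier_mat t (t+u) \<Longrightarrow> Y1 \<in> carrier_mat t (t+u) \<Longrightarrow>
     infinite {z. Good (X0 + z \<cdot>\<^sub>m X1) (Y0 + z \<cdot>\<^sub>m Y1)} \<Longrightarrow> Good X0 Y0"
  and X: "X \<in> carrier_mat (t+u) t" and Y: "Y \<in> carrier_mat t (t+u)"
  shows "Good X Y"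
proof -
  define I' where "I' = cX t u (1\<^sub>m t) (0\<^sub>m u t)"
  have I'c: "I' \<in> carrier_mat (t+u) t" unfolding I'_def by simp
  define dm where "dm d = mat t t (\<lambda>(i,j). if i = j then d i else (0::complex))" for d
  have dmc: "dm d \<in> carrier_mat t t" for d unfolding dm_def by simp
  have z0: "(0\<^sub>m t u :: complex mat) \<in> carrier_mat t u" by simp
  have S0: "Good I' (rY t u (dm d) (0\<^sub>m t u))" for d
  proof -
    have e1: "mat (t+u) t (\<lambda>(i,j). if i = j then (\<lambda>_. 1) i else 0) = I'"
      unfolding I'_def cX_def by (intro eq_matI, auto)
    have e2: "mat t (t+u) (\<lambda>(i,j). if i = j then d i else 0) = rY t u (dm d) (0\<^sub>m t u)"
      unfolding rY_def dm_def by (intro eq_matI, auto)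
    show ?thesis using sparse[of "\<lambda>_. 1" d] unfolding e1 e2 .
  qed
  have BL: "Good I' (rY t u (R * M * R') (0\<^sub>m t u))"
    if g: "Good I' (rY t u M (0\<^sub>m t u))" and M: "M \<in> carrier_mat t t"
      and R: "R \<in> carrier_mat t t" and R': "R' \<in> carrier_mat t t"
      and RR': "R * R' = 1\<^sub>m t" and R'R: "R' * R = 1\<^sub>m t" for M R R'
  proof -
    define G1 where "G1 = four_block_mat R (0\<^sub>m t u) (0\<^sub>m u t) (1\<^sub>m u)"
    define G1' where "G1' = four_block_mat R' (0\<^sub>m t u) (0\<^sub>m u t) (1\<^sub>m u)"
    have G1c: "G1 \<in> carrier_mat (t+u) (t+u)" unfolding G1_def using R by simp
    have G1'c: "G1' \<in> carrier_mat (t+u) (t+u)" unfolding G1'_def using R' by simp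
    have i1: "G1 * G1' = 1\<^sub>m (t+u)" unfolding G1_def G1'_def
      by (subst mult_four_block_mat[OF R _ _ _ R'], insert R R' RR', auto)
    have i2: "G1' * G1 = 1\<^sub>m (t+u)" unfolding G1_def G1'_def
      by (subst mult_four_block_mat[OF R' _ _ _ R], insert R R' R'R, auto)
    have x1: "G1 * I' = cX t u R (0\<^sub>m u t)" unfolding G1_def I'_def
      by (subst mult_fb_cX, insert R, auto)
    have x: "G1 * I' * R' = I'"
    proof -
      have "G1 * I' * R' = cX t u R (0\<^sub>m u t) * R'" by (simp only: x1)
      also have "\<dots> = cX t u (R * R') (0\<^sub>m u t * R')" by (rule mult_cX_sq[OF R' R], simp)
      also have "\<dots> = I'" unfolding I'_def using RR' R' by simp
      finally show ?thesis .
    qed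
    have y1: "R * rY t u M (0\<^sub>m t u) = rY t u (R * M) (0\<^sub>m t u)"
      by (subst mult_sq_rY[OF R M z0], insert R, auto)
    have y: "R * rY t u M (0\<^sub>m t u) * G1' = rY t u (R * M * R') (0\<^sub>m t u)"
      unfolding y1 G1'_def
      by (subst mult_rY_fb, insert R R' M, auto)
    have "Good (G1 * I' * R') (R * rY t u M (0\<^sub>m t u) * G1')"
      by (rule inv[OF I'c _ G1c G1'c i1 i2 R R' RR' R'R g], insert M, simp)
    thus ?thesis unfolding x y .
  qed
  have zX: "(0\<^sub>m (t+u) t :: complex mat) \<in> carrier_mat (t+u) t" by simp
  have I'0: "I' + z \<cdot>\<^sub>m 0\<^sub>m (t+u) t = I'" for z using I'c by (intro eq_matI, auto)
  have S3: "Good I' (rY t u T (0\<^sub>m t u))" if T: "T \<in> carrier_mat t t" and ut: "upper_triangular T" for T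
  proof -
    define D where "D = dm (\<lambda>i. of_nat (Suc i))"
    have Dc: "D \<in> carrier_mat t t" unfolding D_def by (rule dmc)
    define B where "B = (\<lambda>(i,j). (T $$ (j,j) - T $$ (i,i)) / (of_nat i - of_nat j)) ` ({0..<t} \<times> {0..<t})"
    have finB: "finite B" unfolding B_def by simp
    have good: "Good (I' + z \<cdot>\<^sub>m 0\<^sub>m (t+u) t) (rY t u T (0\<^sub>m t u) + z \<cdot>\<^sub>m rY t u D (0\<^sub>m t u))"
      if zB: "z \<notin> B" for z
    proof -
      have eqY: "rY t u T (0\<^sub>m t u) + z \<cdot>\<^sub>m rY t u D (0\<^sub>m t u) = rY t u (T + z \<cdot>\<^sub>m D) (0\<^sub>m t u)"
      proof -
        have "rY t u T (0\<^sub>m t u) + z \<cdot>\<^sub>m rY t u D (0\<^sub>m t u) = rY t u (T + z \<cdot>\<^sub>m D) (0\<^sub>m t u + z \<cdot>\<^sub>m 0\<^sub>m t u)"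
          by (rule rY_line[OF T z0 Dc z0])
        also have "0\<^sub>m t u + z \<cdot>\<^sub>m 0\<^sub>m t u = (0\<^sub>m t u :: complex mat)" by (intro eq_matI, auto)
        finally show ?thesis .
      qed
      let ?T = "T + z \<cdot>\<^sub>m D"
      have Tc: "?T \<in> carrier_mat t t" using T Dc by simp
      have ut2: "upper_triangular ?T" unfolding upper_triangular_def
      proof (intro allI impI)
        fix i j assume i: "i < dim_row ?T" and ji: "j < i"
        have "i < t" using i T Dc by simp
        moreover have "T $$ (i,j) = 0" using ut `i < t` ji T unfolding upper_triangular_def by auto
        ultimately show "?T $$ (i,j) = 0" using ji T Dc unfolding D_def dm_def by auto
      qed
      have dist: "\<forall>i<t. \<forall>j<t. i \<noteq> j \<longrightarrow> ?T $$ (i,i) \<noteq> ?T $$ (j,j)"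
      proof (intro allI impI)
        fix i j assume i: "i < t" and j: "j < t" and ij: "i \<noteq> j"
        show "?T $$ (i,i) \<noteq> ?T $$ (j,j)"
        proof
          assume eq: "?T $$ (i,i) = ?T $$ (j,j)"
          have "?T $$ (i,i) = T $$ (i,i) + z * of_nat (Suc i)" using i T Dc unfolding D_def dm_def by simp
          moreover have "?T $$ (j,j) = T $$ (j,j) + z * of_nat (Suc j)" using j T Dc unfolding D_def dm_def by simp
          ultimately have e2: "z * (of_nat i - of_nat j) = T $$ (j,j) - T $$ (i,i)" using eq
            by (simp add: algebra_simps)
          have nz: "(of_nat i - of_nat j :: complex) \<noteq> 0" using ij by simp
          have "z = (T $$ (j,j) - T $$ (i,i)) / (of_nat i - of_nat j)" using e2 nz
            by (simp add: field_simps)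
          hence "z \<in> B" unfolding B_def using i j by force
          thus False using zB by simp
        qed
      qed
      obtain R R' d where RR: "R \<in> carrier_mat t t" "R' \<in> carrier_mat t t" "R * R' = 1\<^sub>m t" "R' * R = 1\<^sub>m t"
        "?T = R * mat t t (\<lambda>(i,j). if i = j then d i else 0) * R'"
        using tri_diag[OF Tc ut2 dist] by blast
      have "Good I' (rY t u (R * dm d * R') (0\<^sub>m t u))"
        by (rule BL[OF S0 dmc RR(1-4)])
      hence "Good I' (rY t u ?T (0\<^sub>m t u))" using RR(5) unfolding dm_def by simp
      thus ?thesis unfolding eqY I'0 .
    qed
    have "infinite {z. Good (I' + z \<cdot>\<^sub>m 0\<^sub>m (t+u) t) (rY t u T (0\<^sub>m t u) + z \<cdot>\<^sub>m rY t u D (0\<^sub>m t u))}"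
      by (rule infinite_compl[OF finB], insert good, auto)
    thus ?thesis by (rule line[OF I'c zX rY_carrier[OF T z0] rY_carrier[OF Dc z0]])
  qed
  have S2: "Good I' (rY t u Z (0\<^sub>m t u))" if Z: "Z \<in> carrier_mat t t" for Z
  proof -
    obtain as where cp: "char_poly Z = (\<Prod>a\<leftarrow>as. [:- a, 1:])"
      using char_poly_factorized[OF Z] by blast
    obtain n_as where jnf: "jordan_nf Z n_as" using jordan_nf_exists[OF Z cp] by blast
    have "similar_mat Z (jordan_matrix n_as)" using jnf unfolding jordan_nf_def by simp
    then obtain P Q where wit: "similar_mat_wit Z (jordan_matrix n_as) P Q"
      unfolding similar_mat_def by blast
    note w = similar_mat_witD2[OF Z wit]
    have ut: "upper_triangular (jordan_matrix n_as)" unfolding upper_triangular_def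
      using jordan_matrix_upper_triangular[of _ n_as] by simp
    have "Good I' (rY t u (P * jordan_matrix n_as * Q) (0\<^sub>m t u))"
      by (rule BL[OF S3[OF w(5) ut] w(5) w(6) w(7) w(1) w(2)])
    thus ?thesis using w(3) by simp
  qed
  have one_t: "(1\<^sub>m t :: complex mat) \<in> carrier_mat t t" by simp
  have S1b: "Good I' (rY t u Y1 Y2)"
    if Y1: "Y1 \<in> carrier_mat t t" and Y2: "Y2 \<in> carrier_mat t u" and Yi: "Y1i \<in> carrier_mat t t"
      and YY: "Y1 * Y1i = 1\<^sub>m t" for Y1 Y2 Y1i
  proof -
    define W where "W = Y1i * Y2"
    have Wc: "W \<in> carrier_mat t u" unfolding W_def using Yi Y2 by simp
    define G1 where "G1 = four_block_mat (1\<^sub>m t) (- W) (0\<^sub>m u t) (1\<^sub>m u)"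
    define G1' where "G1' = four_block_mat (1\<^sub>m t) W (0\<^sub>m u t) (1\<^sub>m u)"
    have G1c: "G1 \<in> carrier_mat (t+u) (t+u)" unfolding G1_def by simp
    have G1'c: "G1' \<in> carrier_mat (t+u) (t+u)" unfolding G1'_def by simp
    have wz: "W + - W = 0\<^sub>m t u" "- W + W = 0\<^sub>m t u" using Wc by (intro eq_matI, auto)+
    have mz: "(- 0\<^sub>m u u + 1\<^sub>m u :: complex mat) = 1\<^sub>m u" by (intro eq_matI, auto)
    have i1: "G1 * G1' = 1\<^sub>m (t+u)" unfolding G1_def G1'_def
      by (subst mult_four_block_mat[OF one_t _ _ _ one_t], insert Wc wz, auto)
    have nz: "(- 0\<^sub>m u u :: complex mat) = 0\<^sub>m u u" by (intro eq_matI, auto)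
    have i2: "G1' * G1 = 1\<^sub>m (t+u)" unfolding G1_def G1'_def
      by (subst mult_four_block_mat[OF one_t _ _ _ one_t], insert Wc wz, auto simp: nz)
    have x: "G1 * I' * 1\<^sub>m t = I'"
    proof -
      have "G1 * I' = cX t u (1\<^sub>m t * 1\<^sub>m t + - W * 0\<^sub>m u t) (0\<^sub>m u t * 1\<^sub>m t + 1\<^sub>m u * 0\<^sub>m u t)"
        unfolding G1_def I'_def by (rule mult_fb_cX, insert Wc, auto)
      also have "\<dots> = I'" unfolding I'_def using Wc by simp
      finally show ?thesis using I'c by simp
    qed
    have Yc: "rY t u Y1 (0\<^sub>m t u) \<in> carrier_mat t (t+u)" using Y1 by simp
    have y: "1\<^sub>m t * rY t u Y1 (0\<^sub>m t u) * G1' = rY t u Y1 Y2"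
    proof -
      have "1\<^sub>m t * rY t u Y1 (0\<^sub>m t u) * G1' = rY t u Y1 (0\<^sub>m t u) * G1'" using Yc by simp
      also have "\<dots> = rY t u (Y1 * 1\<^sub>m t + 0\<^sub>m t u * 0\<^sub>m u t) (Y1 * W + 0\<^sub>m t u * 1\<^sub>m u)"
        unfolding G1'_def by (rule mult_rY_fb, insert Wc Y1, auto)
      also have "Y1 * W = Y2" unfolding W_def
        using assoc_mult_mat[OF Y1 Yi Y2, symmetric] YY Y2 by simp
      finally show ?thesis using Y1 Y2 by simp
    qed
    have "Good (G1 * I' * 1\<^sub>m t) (1\<^sub>m t * rY t u Y1 (0\<^sub>m t u) * G1')"
      by (rule inv[OF I'c Yc G1c G1'c i1 i2 one_t one_t _ _ S2[OF Y1]], auto)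
    thus ?thesis unfolding x y .
  qed
  have S1a: "Good I' Y" if Y: "Y \<in> carrier_mat t (t+u)" for Y
  proof -
    obtain Y1 Y2 where YY: "Y1 \<in> carrier_mat t t" "Y2 \<in> carrier_mat t u" "Y = rY t u Y1 Y2"
      using split_Y[OF Y] by blast
    have "{z. z \<notin> {z. det (Y1 + z \<cdot>\<^sub>m 1\<^sub>m t) = 0}} \<subseteq>
        {z. Good (I' + z \<cdot>\<^sub>m 0\<^sub>m (t+u) t) (Y + z \<cdot>\<^sub>m rY t u (1\<^sub>m t) (0\<^sub>m t u))}"
    proof
      fix z assume "z \<in> {z. z \<notin> {z. det (Y1 + z \<cdot>\<^sub>m 1\<^sub>m t) = 0}}"
      hence dz: "det (Y1 + z \<cdot>\<^sub>m 1\<^sub>m t) \<noteq> 0" by simp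
      have Mc: "Y1 + z \<cdot>\<^sub>m 1\<^sub>m t \<in> carrier_mat t t" using YY by simp
      obtain Mi where Mi: "Mi \<in> carrier_mat t t" "(Y1 + z \<cdot>\<^sub>m 1\<^sub>m t) * Mi = 1\<^sub>m t"
        using det_inv[OF Mc dz] by blast
      have "Good I' (rY t u (Y1 + z \<cdot>\<^sub>m 1\<^sub>m t) Y2)" by (rule S1b[OF Mc YY(2) Mi])
      moreover have "Y + z \<cdot>\<^sub>m rY t u (1\<^sub>m t) (0\<^sub>m t u) = rY t u (Y1 + z \<cdot>\<^sub>m 1\<^sub>m t) Y2"
      proof -
        have "Y + z \<cdot>\<^sub>m rY t u (1\<^sub>m t) (0\<^sub>m t u) = rY t u (Y1 + z \<cdot>\<^sub>m 1\<^sub>m t) (Y2 + z \<cdot>\<^sub>m 0\<^sub>m t u)"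
          unfolding YY(3) by (rule rY_line[OF YY(1,2) one_t z0])
        also have "Y2 + z \<cdot>\<^sub>m 0\<^sub>m t u = Y2" using YY(2) by (intro eq_matI, auto)
        finally show ?thesis .
      qed
      ultimately show "z \<in> {z. Good (I' + z \<cdot>\<^sub>m 0\<^sub>m (t+u) t) (Y + z \<cdot>\<^sub>m rY t u (1\<^sub>m t) (0\<^sub>m t u))}"
        using I'0 by simp
    qed
    hence "infinite {z. Good (I' + z \<cdot>\<^sub>m 0\<^sub>m (t+u) t) (Y + z \<cdot>\<^sub>m rY t u (1\<^sub>m t) (0\<^sub>m t u))}"
      by (rule infinite_compl[OF bad_det_finite[OF YY(1)]])
    thus ?thesis by (rule line[OF I'c zX Y rY_carrier[OF one_t z0]])
  qed
  have S1: "Good (cX t u X1 X3) Y"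
    if X1: "X1 \<in> carrier_mat t t" and X3: "X3 \<in> carrier_mat u t" and Xi: "X1i \<in> carrier_mat t t"
      and XX: "X1 * X1i = 1\<^sub>m t" "X1i * X1 = 1\<^sub>m t" and Y: "Y \<in> carrier_mat t (t+u)" for X1 X3 X1i Y
  proof -
    define K where "K = X3 * X1i"
    have Kc: "K \<in> carrier_mat u t" unfolding K_def using X3 Xi by simp
    have mKc: "- K \<in> carrier_mat u t" using Kc by simp
    define G1 where "G1 = four_block_mat X1 (0\<^sub>m t u) X3 (1\<^sub>m u)"
    define G1' where "G1' = four_block_mat X1i (0\<^sub>m t u) (- K) (1\<^sub>m u)"
    have G1c: "G1 \<in> carrier_mat (t+u) (t+u)" unfolding G1_def using X1 by simp
    have G1'c: "G1' \<in> carrier_mat (t+u) (t+u)" unfolding G1'_def using Xi by simp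
    have c1: "X3 * X1i + 1\<^sub>m u * - K = 0\<^sub>m u t"
    proof -
      have "1\<^sub>m u * - K = - K" using mKc by simp
      thus ?thesis unfolding K_def[symmetric] using add_uminus_zero_mat[OF Kc] by simp
    qed
    have c2: "- K * X1 + 1\<^sub>m u * X3 = 0\<^sub>m u t"
    proof -
      have e1: "- K * X1 = - (K * X1)" by (rule uminus_mult_left_mat, insert Kc X1, simp)
      have e2: "K * X1 = X3" unfolding K_def using assoc_mult_mat[OF X3 Xi X1] XX X3 by simp
      have e3: "1\<^sub>m u * X3 = X3" using X3 by simp
      show ?thesis unfolding e1 e2 e3 by (rule uminus_l_inv_mat[OF X3])
    qed
    have i1: "G1 * G1' = 1\<^sub>m (t+u)"
    proof -
      have "G1 * G1' = four_block_mat (X1 * X1i + 0\<^sub>m t u * - K) (X1 * 0\<^sub>m t u + 0\<^sub>m t u * 1\<^sub>m u)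
          (X3 * X1i + 1\<^sub>m u * - K) (X3 * 0\<^sub>m t u + 1\<^sub>m u * 1\<^sub>m u)"
        unfolding G1_def G1'_def by (rule mult_four_block_mat[OF X1 _ X3 _ Xi _ mKc], auto)
      also have "\<dots> = four_block_mat (1\<^sub>m t) (0\<^sub>m t u) (0\<^sub>m u t) (1\<^sub>m u)"
      proof (rule cong_four_block_mat)
        show "X1 * X1i + 0\<^sub>m t u * - K = 1\<^sub>m t" using XX(1) mKc by simp
        show "X1 * 0\<^sub>m t u + 0\<^sub>m t u * 1\<^sub>m u = (0\<^sub>m t u :: complex mat)" using X1 by simp
        show "X3 * X1i + 1\<^sub>m u * - K = 0\<^sub>m u t" by (rule c1)
        show "X3 * 0\<^sub>m t u + 1\<^sub>m u * 1\<^sub>m u = (1\<^sub>m u :: complex mat)" using X3 by simp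
      qed
      finally show ?thesis by simp
    qed
    have i2: "G1' * G1 = 1\<^sub>m (t+u)"
    proof -
      have "G1' * G1 = four_block_mat (X1i * X1 + 0\<^sub>m t u * X3) (X1i * 0\<^sub>m t u + 0\<^sub>m t u * 1\<^sub>m u)
          (- K * X1 + 1\<^sub>m u * X3) (- K * 0\<^sub>m t u + 1\<^sub>m u * 1\<^sub>m u)"
        unfolding G1_def G1'_def by (rule mult_four_block_mat[OF Xi _ mKc _ X1 _ X3], auto)
      also have "\<dots> = four_block_mat (1\<^sub>m t) (0\<^sub>m t u) (0\<^sub>m u t) (1\<^sub>m u)"
      proof (rule cong_four_block_mat)
        show "X1i * X1 + 0\<^sub>m t u * X3 = 1\<^sub>m t" using XX(2) X3 by simp
        show "X1i * 0\<^sub>m t u + 0\<^sub>m t u * 1\<^sub>m u = (0\<^sub>m t u :: complex mat)" using Xi by simp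
        show "- K * X1 + 1\<^sub>m u * X3 = 0\<^sub>m u t" by (rule c2)
        show "- K * 0\<^sub>m t u + 1\<^sub>m u * 1\<^sub>m u = (1\<^sub>m u :: complex mat)" using mKc by simp
      qed
      finally show ?thesis by simp
    qed
    have x: "G1 * I' * 1\<^sub>m t = cX t u X1 X3"
    proof -
      have "G1 * I' = cX t u (X1 * 1\<^sub>m t + 0\<^sub>m t u * 0\<^sub>m u t) (X3 * 1\<^sub>m t + 1\<^sub>m u * 0\<^sub>m u t)"
        unfolding G1_def I'_def by (rule mult_fb_cX, insert X1 X3, auto)
      also have "\<dots> = cX t u X1 X3" using X1 X3 by simp
      finally show ?thesis using cX_carrier[OF X1, of u X3] by simp
    qed
    have YG: "Y * G1 \<in> carrier_mat t (t+u)" using Y G1c by simp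
    have y: "1\<^sub>m t * (Y * G1) * G1' = Y"
    proof -
      have "1\<^sub>m t * (Y * G1) * G1' = Y * G1 * G1'" by (simp only: left_mult_one_mat[OF YG])
      also have "\<dots> = Y * (G1 * G1')" by (rule assoc_mult_mat[OF Y G1c G1'c])
      finally show ?thesis using i1 Y by simp
    qed
    have "Good (G1 * I' * 1\<^sub>m t) (1\<^sub>m t * (Y * G1) * G1')"
      by (rule inv[OF I'c YG G1c G1'c i1 i2 one_t one_t _ _ S1a[OF YG]], auto)
    thus ?thesis unfolding x y .
  qed
  obtain X1 X3 where XX: "X1 \<in> carrier_mat t t" "X3 \<in> carrier_mat u t" "X = cX t u X1 X3"
    using split_X[OF X] by blast
  have zY: "(0\<^sub>m t (t+u) :: complex mat) \<in> carrier_mat t (t+u)" by simp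
  have z1: "(0\<^sub>m u t :: complex mat) \<in> carrier_mat u t" by simp
  have "{z. z \<notin> {z. det (X1 + z \<cdot>\<^sub>m 1\<^sub>m t) = 0}} \<subseteq>
      {z. Good (X + z \<cdot>\<^sub>m I') (Y + z \<cdot>\<^sub>m 0\<^sub>m t (t+u))}"
  proof
    fix z assume "z \<in> {z. z \<notin> {z. det (X1 + z \<cdot>\<^sub>m 1\<^sub>m t) = 0}}"
    hence dz: "det (X1 + z \<cdot>\<^sub>m 1\<^sub>m t) \<noteq> 0" by simp
    have Mc: "X1 + z \<cdot>\<^sub>m 1\<^sub>m t \<in> carrier_mat t t" using XX by simp
    obtain Mi where Mi: "Mi \<in> carrier_mat t t" "(X1 + z \<cdot>\<^sub>m 1\<^sub>m t) * Mi = 1\<^sub>m t"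
      "Mi * (X1 + z \<cdot>\<^sub>m 1\<^sub>m t) = 1\<^sub>m t"
      using det_inv[OF Mc dz] by blast
    have "Good (cX t u (X1 + z \<cdot>\<^sub>m 1\<^sub>m t) X3) Y" by (rule S1[OF Mc XX(2) Mi Y])
    moreover have "X + z \<cdot>\<^sub>m I' = cX t u (X1 + z \<cdot>\<^sub>m 1\<^sub>m t) X3"
    proof -
      have "X + z \<cdot>\<^sub>m I' = cX t u (X1 + z \<cdot>\<^sub>m 1\<^sub>m t) (X3 + z \<cdot>\<^sub>m 0\<^sub>m u t)"
        unfolding XX(3) I'_def by (rule cX_line[OF XX(1,2) one_t z1])
      also have "X3 + z \<cdot>\<^sub>m 0\<^sub>m u t = X3" using XX(2) by (intro eq_matI, auto)
      finally show ?thesis .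
    qed
    moreover have "Y + z \<cdot>\<^sub>m 0\<^sub>m t (t+u) = Y" using Y by (intro eq_matI, auto)
    ultimately show "z \<in> {z. Good (X + z \<cdot>\<^sub>m I') (Y + z \<cdot>\<^sub>m 0\<^sub>m t (t+u))}" by simp
  qed
  hence "infinite {z. Good (X + z \<cdot>\<^sub>m I') (Y + z \<cdot>\<^sub>m 0\<^sub>m t (t+u))}"
    by (rule infinite_compl[OF bad_det_finite[OF XX(1)]])
  thus ?thesis by (rule line[OF X I'c Y zY])
qed


definition dmat :: "nat \<Rightarrow> (nat \<Rightarrow> complex) \<Rightarrow> complex mat" where
  "dmat n g = mat n n (\<lambda>(i,j). if i = j then g i else 0)"

lemma dmat_carrier[simp]: "dmat n g \<in> carrier_mat n n" unfolding dmat_def by simp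

lemma sum_single_nat:
  fixes i n :: nat
  assumes "i < n"
  shows "(\<Sum>k\<in>{0..<n}. (if k = i then f k else (0::complex))) = f i"
  using sum.delta[of "{0..<n}" i f] assms by simp

lemma mult_entry:
  assumes "A \<in> carrier_mat nr n" "B \<in> carrier_mat n nc" "i < nr" "j < nc"
  shows "(A * B) $$ (i,j) = (\<Sum>k\<in>{0..<n}. A $$ (i,k) * B $$ (k,j))"
  using assms by (simp add: scalar_prod_def)

lemma dmat_mult_left:
  assumes "B \<in> carrier_mat n nc"
  shows "dmat n g * B = mat n nc (\<lambda>(i,j). g i * B $$ (i,j))"
proof (rule eq_matI)
  fix i j assume i: "i < dim_row (mat n nc (\<lambda>(i,j). g i * B $$ (i,j)))"
    and j: "j < dim_col (mat n nc (\<lambda>(i,j). g i * B $$ (i,j)))"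
  have in_: "i < n" "j < nc" using i j by auto
  have "(dmat n g * B) $$ (i,j) = (\<Sum>k\<in>{0..<n}. dmat n g $$ (i,k) * B $$ (k,j))"
    by (rule mult_entry[OF dmat_carrier assms in_])
  also have "\<dots> = (\<Sum>k\<in>{0..<n}. (if k = i then g i * B $$ (k,j) else 0))"
    by (rule sum.cong, insert in_, auto simp: dmat_def)
  also have "\<dots> = g i * B $$ (i,j)" using sum_single_nat[of i n "\<lambda>k. g i * B $$ (k,j)"] i by simp
  finally show "(dmat n g * B) $$ (i,j) = mat n nc (\<lambda>(i,j). g i * B $$ (i,j)) $$ (i,j)" using i j by simp
qed (insert assms, auto simp: dmat_def)

lemma dmat_mult_right:
  assumes "B \<in> carrier_mat nr n"
  shows "B * dmat n g = mat nr n (\<lambda>(i,j). B $$ (i,j) * g j)"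
proof (rule eq_matI)
  fix i j assume i: "i < dim_row (mat nr n (\<lambda>(i,j). B $$ (i,j) * g j))"
    and j: "j < dim_col (mat nr n (\<lambda>(i,j). B $$ (i,j) * g j))"
  have in_: "i < nr" "j < n" using i j by auto
  have "(B * dmat n g) $$ (i,j) = (\<Sum>k\<in>{0..<n}. B $$ (i,k) * dmat n g $$ (k,j))"
    by (rule mult_entry[OF assms dmat_carrier in_])
  also have "\<dots> = (\<Sum>k\<in>{0..<n}. (if k = j then B $$ (i,k) * g j else 0))"
    by (rule sum.cong, insert in_, auto simp: dmat_def)
  also have "\<dots> = B $$ (i,j) * g j" using sum_single_nat[of j n "\<lambda>k. B $$ (i,k) * g j"] j by simp
  finally show "(B * dmat n g) $$ (i,j) = mat nr n (\<lambda>(i,j). B $$ (i,j) * g j) $$ (i,j)" using i j by simp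
qed (insert assms, auto simp: dmat_def)

lemma anticomm_dmat_iff:
  assumes "B \<in> carrier_mat n n"
  shows "(dmat n g, B) \<in> anticomm_var n \<longleftrightarrow> (\<forall>i<n. \<forall>j<n. (g i + g j) * B $$ (i,j) = 0)"
proof -
  have "dmat n g * B + B * dmat n g = mat n n (\<lambda>(i,j). (g i + g j) * B $$ (i,j))"
    unfolding dmat_mult_left[OF assms] dmat_mult_right[OF assms]
    by (intro eq_matI, auto simp: algebra_simps)
  moreover have "mat n n (\<lambda>(i,j). (g i + g j) * B $$ (i,j)) = 0\<^sub>m n n \<longleftrightarrow>
     (\<forall>i<n. \<forall>j<n. (g i + g j) * B $$ (i,j) = 0)"
  proof
    assume "mat n n (\<lambda>(i,j). (g i + g j) * B $$ (i,j)) = 0\<^sub>m n n"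
    thus "\<forall>i<n. \<forall>j<n. (g i + g j) * B $$ (i,j) = 0"
      by (metis (no_types, lifting) case_prod_conv index_mat(1) index_zero_mat(1))
  next
    assume "\<forall>i<n. \<forall>j<n. (g i + g j) * B $$ (i,j) = 0"
    thus "mat n n (\<lambda>(i,j). (g i + g j) * B $$ (i,j)) = 0\<^sub>m n n" by (intro eq_matI, auto)
  qed
  ultimately show ?thesis unfolding anticomm_var_def using assms by auto
qed

definition pmat :: "nat \<Rightarrow> (nat \<Rightarrow> nat) \<Rightarrow> complex mat" where
  "pmat n \<sigma> = mat n n (\<lambda>(i,j). if i = \<sigma> j then 1 else 0)"
definition pmat' :: "nat \<Rightarrow> (nat \<Rightarrow> nat) \<Rightarrow> complex mat" where
  "pmat' n \<sigma> = mat n n (\<lambda>(i,j). if j = \<sigma> i then 1 else 0)"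

lemma perm_sum:
  fixes \<sigma> \<tau> :: "nat \<Rightarrow> nat" and n i :: nat
  assumes st: "\<forall>k<n. \<sigma> k < n \<and> \<tau> (\<sigma> k) = k" "\<forall>i<n. \<tau> i < n \<and> \<sigma> (\<tau> i) = i"
    and i: "i < n"
  shows "(\<Sum>k\<in>{0..<n}. (if i = \<sigma> k then f k else (0::complex))) = f (\<tau> i)"
proof -
  have "(\<Sum>k\<in>{0..<n}. (if i = \<sigma> k then f k else (0::complex))) =
        (\<Sum>k\<in>{0..<n}. (if k = \<tau> i then f k else 0))"
    by (rule sum.cong, insert st i, auto)
  also have "\<dots> = f (\<tau> i)" using sum_single_nat[of "\<tau> i" n f] st i by simp
  finally show ?thesis .
qed

lemma pmat_props:
  fixes \<sigma> \<tau> :: "nat \<Rightarrow> nat"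
  assumes st: "\<forall>k<n. \<sigma> k < n \<and> \<tau> (\<sigma> k) = k" "\<forall>i<n. \<tau> i < n \<and> \<sigma> (\<tau> i) = i"
  shows "pmat n \<sigma> * pmat' n \<sigma> = 1\<^sub>m n" "pmat' n \<sigma> * pmat n \<sigma> = 1\<^sub>m n"
    "pmat n \<sigma> * dmat n g * pmat' n \<sigma> = dmat n (\<lambda>i. g (\<tau> i))"
proof -
  have pc: "pmat n \<sigma> \<in> carrier_mat n n" unfolding pmat_def by simp
  have pc': "pmat' n \<sigma> \<in> carrier_mat n n" unfolding pmat'_def by simp
  show "pmat n \<sigma> * pmat' n \<sigma> = 1\<^sub>m n"
  proof (rule eq_matI)
    fix i j assume i: "i < dim_row (1\<^sub>m n :: complex mat)" and j: "j < dim_col (1\<^sub>m n :: complex mat)"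
    have in_: "i < n" "j < n" using i j by auto
    have "(pmat n \<sigma> * pmat' n \<sigma>) $$ (i,j) = (\<Sum>k\<in>{0..<n}. pmat n \<sigma> $$ (i,k) * pmat' n \<sigma> $$ (k,j))"
      by (rule mult_entry[OF pc pc' in_])
    also have "\<dots> = (\<Sum>k\<in>{0..<n}. (if i = \<sigma> k then (if j = \<sigma> k then 1 else 0) else 0))"
      by (rule sum.cong, insert in_, auto simp: pmat_def pmat'_def)
    also have "\<dots> = (if j = \<sigma> (\<tau> i) then 1 else 0)"
      by (rule perm_sum[OF st], insert in_, simp)
    also have "\<dots> = 1\<^sub>m n $$ (i,j)" using in_ st by auto
    finally show "(pmat n \<sigma> * pmat' n \<sigma>) $$ (i,j) = 1\<^sub>m n $$ (i,j)" .
  qed (auto simp: pmat_def pmat'_def)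
  show "pmat' n \<sigma> * pmat n \<sigma> = 1\<^sub>m n"
  proof (rule eq_matI)
    fix i j assume i: "i < dim_row (1\<^sub>m n :: complex mat)" and j: "j < dim_col (1\<^sub>m n :: complex mat)"
    have in_: "i < n" "j < n" using i j by auto
    have "(pmat' n \<sigma> * pmat n \<sigma>) $$ (i,j) = (\<Sum>k\<in>{0..<n}. pmat' n \<sigma> $$ (i,k) * pmat n \<sigma> $$ (k,j))"
      by (rule mult_entry[OF pc' pc in_])
    also have "\<dots> = (\<Sum>k\<in>{0..<n}. (if k = \<sigma> i then (if \<sigma> i = \<sigma> j then 1 else 0) else 0))"
      by (rule sum.cong, insert in_, auto simp: pmat_def pmat'_def)
    also have "\<dots> = (if \<sigma> i = \<sigma> j then 1 else 0)"
      using sum_single_nat[of "\<sigma> i" n "\<lambda>k. if \<sigma> i = \<sigma> j then 1 else 0"] in_ st by simp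
    also have "\<dots> = 1\<^sub>m n $$ (i,j)"
    proof -
      have "\<sigma> i = \<sigma> j \<longleftrightarrow> i = j" using st in_ by metis
      thus ?thesis using in_ by simp
    qed
    finally show "(pmat' n \<sigma> * pmat n \<sigma>) $$ (i,j) = 1\<^sub>m n $$ (i,j)" .
  qed (auto simp: pmat_def pmat'_def)
  show "pmat n \<sigma> * dmat n g * pmat' n \<sigma> = dmat n (\<lambda>i. g (\<tau> i))"
  proof (rule eq_matI)
    fix i j assume i: "i < dim_row (dmat n (\<lambda>i. g (\<tau> i)))" and j: "j < dim_col (dmat n (\<lambda>i. g (\<tau> i)))"
    have in_: "i < n" "j < n" using i j by (auto simp: dmat_def)
    have pdc: "pmat n \<sigma> * dmat n g \<in> carrier_mat n n" using pc by simp
    have "(pmat n \<sigma> * dmat n g * pmat' n \<sigma>) $$ (i,j) =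
        (\<Sum>k\<in>{0..<n}. (pmat n \<sigma> * dmat n g) $$ (i,k) * pmat' n \<sigma> $$ (k,j))"
      by (rule mult_entry[OF pdc pc' in_])
    also have "\<dots> = (\<Sum>k\<in>{0..<n}. (if i = \<sigma> k then g k * (if j = \<sigma> k then 1 else 0) else 0))"
      unfolding dmat_mult_right[OF pc]
      by (rule sum.cong, insert in_, auto simp: pmat_def pmat'_def)
    also have "\<dots> = g (\<tau> i) * (if j = \<sigma> (\<tau> i) then 1 else 0)"
      by (rule perm_sum[OF st], insert in_, simp)
    also have "\<dots> = dmat n (\<lambda>i. g (\<tau> i)) $$ (i,j)" using in_ st unfolding dmat_def by auto
    finally show "(pmat n \<sigma> * dmat n g * pmat' n \<sigma>) $$ (i,j) = dmat n (\<lambda>i. g (\<tau> i)) $$ (i,j)" .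
  qed (auto simp: pmat_def pmat'_def dmat_def)
qed


definition Adiag :: "nat \<Rightarrow> nat \<Rightarrow> complex \<Rightarrow> complex mat" where
  "Adiag s t a = dmat (s+t) (\<lambda>i. if i < s then a else - a)"

definition Bf :: "nat \<Rightarrow> nat \<Rightarrow> complex mat \<Rightarrow> complex mat \<Rightarrow> complex mat" where
  "Bf s t X Y = four_block_mat (0\<^sub>m s s) X Y (0\<^sub>m t t)"

definition SSet :: "nat \<Rightarrow> nat \<Rightarrow> (complex mat \<times> complex mat) set" where
  "SSet s t = \<Union> {gl_orbit (s+t) (gen_diag (min s t) (max s t - min s t) 0 a, B) | a B.
        generic_params (min s t) (max s t - min s t) a \<and>
        (gen_diag (min s t) (max s t - min s t) 0 a, B) \<in> anticomm_var (s+t)}"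

lemma Zpmr_eq: "Zpmr (min s t) (max s t - min s t) 0 = zariski_closure_in (s+t) (SSet s t)"
proof -
  have n: "2 * min s t + (max s t - min s t) + 0 = s + t" by (simp add: min_def max_def)
  show ?thesis unfolding Zpmr_def Let_def SSet_def n ..
qed

lemma SSet_sub: "SSet s t \<subseteq> anticomm_var (s+t)"
proof
  fix x assume "x \<in> SSet s t"
  then obtain a B where aB: "(gen_diag (min s t) (max s t - min s t) 0 a, B) \<in> anticomm_var (s+t)"
    "x \<in> gl_orbit (s+t) (gen_diag (min s t) (max s t - min s t) 0 a, B)"
    unfolding SSet_def by blast
  then obtain P Q where PQ: "P \<in> carrier_mat (s+t) (s+t)" "Q \<in> carrier_mat (s+t) (s+t)"
    "P * Q = 1\<^sub>m (s+t)" "Q * P = 1\<^sub>m (s+t)"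
    "x = (P * gen_diag (min s t) (max s t - min s t) 0 a * Q, P * B * Q)"
    unfolding gl_orbit_def by auto
  show "x \<in> anticomm_var (s+t)" unfolding PQ(5) by (rule conj_anticomm[OF PQ(1,2,4) aB(1)])
qed

lemma SSet_conj:
  assumes "(A', B') \<in> SSet s t" "P \<in> carrier_mat (s+t) (s+t)" "Q \<in> carrier_mat (s+t) (s+t)"
    "P * Q = 1\<^sub>m (s+t)" "Q * P = 1\<^sub>m (s+t)"
  shows "(P * A' * Q, P * B' * Q) \<in> SSet s t"
proof -
  let ?n = "s + t"
  let ?D = "\<lambda>a. gen_diag (min s t) (max s t - min s t) 0 a"
  obtain a B where aB: "generic_params (min s t) (max s t - min s t) a" "(?D a, B) \<in> anticomm_var ?n"
    "(A', B') \<in> gl_orbit ?n (?D a, B)"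
    using assms(1) unfolding SSet_def by blast
  then obtain P0 Q0 where PQ: "P0 \<in> carrier_mat ?n ?n" "Q0 \<in> carrier_mat ?n ?n"
    "P0 * Q0 = 1\<^sub>m ?n" "Q0 * P0 = 1\<^sub>m ?n" "A' = P0 * ?D a * Q0" "B' = P0 * B * Q0"
    unfolding gl_orbit_def by auto
  have Dc: "?D a \<in> carrier_mat ?n ?n" and Bc: "B \<in> carrier_mat ?n ?n"
    using aB(2) unfolding anticomm_var_def by auto
  have P1: "P * P0 \<in> carrier_mat ?n ?n" "Q0 * Q \<in> carrier_mat ?n ?n" using PQ assms by auto
  have i1: "(P * P0) * (Q0 * Q) = 1\<^sub>m ?n"
  proof -
    have "(P * P0) * (Q0 * Q) = P * (P0 * (Q0 * Q))"
      using PQ assms by (simp add: assoc_mult_mat[of _ ?n ?n _ ?n _ ?n])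
    also have "P0 * (Q0 * Q) = (P0 * Q0) * Q" by (rule assoc_mult_mat[symmetric, OF PQ(1,2) assms(3)])
    also have "\<dots> = Q" by (simp only: PQ(3) left_mult_one_mat[OF assms(3)])
    finally show ?thesis using assms by simp
  qed
  have i2: "(Q0 * Q) * (P * P0) = 1\<^sub>m ?n"
  proof -
    have "(Q0 * Q) * (P * P0) = Q0 * (Q * (P * P0))"
      using PQ assms by (simp add: assoc_mult_mat[of _ ?n ?n _ ?n _ ?n])
    also have "Q * (P * P0) = (Q * P) * P0" by (rule assoc_mult_mat[symmetric, OF assms(3,2) PQ(1)])
    also have "\<dots> = P0" by (simp only: assms(5) left_mult_one_mat[OF PQ(1)])
    finally show ?thesis using PQ by simp
  qed
  have e: "P * (P0 * M * Q0) * Q = (P * P0) * M * (Q0 * Q)" if "M \<in> carrier_mat ?n ?n" for M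
    using PQ assms that by (simp add: assoc_mult_mat[of _ ?n ?n _ ?n _ ?n])
  have "(P * A' * Q, P * B' * Q) \<in> gl_orbit ?n (?D a, B)"
    unfolding gl_orbit_def PQ(5,6) e[OF Dc] e[OF Bc] using P1 i1 i2 by auto
  thus ?thesis unfolding SSet_def using aB(1,2) by blast
qed

definition Good :: "nat \<Rightarrow> nat \<Rightarrow> complex \<Rightarrow> complex mat \<Rightarrow> complex mat \<Rightarrow> bool" where
  "Good s t a X Y \<longleftrightarrow> (Adiag s t a, Bf s t X Y) \<in> zariski_closure_in (s+t) (SSet s t)"

lemma Bf_carrier[simp]: "X \<in> carrier_mat s t \<Longrightarrow> Y \<in> carrier_mat t s \<Longrightarrow> Bf s t X Y \<in> carrier_mat (s+t) (s+t)"
  unfolding Bf_def by simp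

lemma Adiag_carrier[simp]: "Adiag s t a \<in> carrier_mat (s+t) (s+t)"
  unfolding Adiag_def by simp

lemma Bf_index:
  assumes "X \<in> carrier_mat s t" "Y \<in> carrier_mat t s" "i < s + t" "j < s + t"
  shows "Bf s t X Y $$ (i,j) = (if i < s then (if j < s then 0 else X $$ (i, j - s))
                                else (if j < s then Y $$ (i - s, j) else 0))"
  using assms unfolding Bf_def by simp

lemma anticomm_Bf:
  assumes "X \<in> carrier_mat s t" "Y \<in> carrier_mat t s"
  shows "(Adiag s t a, Bf s t X Y) \<in> anticomm_var (s+t)"
  unfolding Adiag_def
  by (subst anticomm_dmat_iff, insert assms, auto simp: Bf_index)

lemma good_line:
  assumes "X0 \<in> carrier_mat s t" "X1 \<in> carrier_mat s t" "Y0 \<in> carrier_mat t s" "Y1 \<in> carrier_mat t s"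
    "infinite {z. Good s t a (X0 + z \<cdot>\<^sub>m X1) (Y0 + z \<cdot>\<^sub>m Y1)}"
  shows "Good s t a X0 Y0"
proof -
  have e1: "Bf s t (X0 + z \<cdot>\<^sub>m X1) (Y0 + z \<cdot>\<^sub>m Y1) = Bf s t X0 Y0 + z \<cdot>\<^sub>m Bf s t X1 Y1" for z
    using assms unfolding Bf_def by (intro eq_matI, auto)
  have e2: "Adiag s t a + z \<cdot>\<^sub>m 0\<^sub>m (s+t) (s+t) = Adiag s t a" for z
    by (intro eq_matI, auto simp: Adiag_def dmat_def)
  have "infinite {z. (Adiag s t a + z \<cdot>\<^sub>m 0\<^sub>m (s+t) (s+t), Bf s t X0 Y0 + z \<cdot>\<^sub>m Bf s t X1 Y1)
      \<in> zariski_closure_in (s+t) (SSet s t)}"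
    using assms(5) unfolding Good_def e1 e2 .
  hence "(Adiag s t a, Bf s t X0 Y0) \<in> zariski_closure_in (s+t) (SSet s t)"
    by (rule zc_curve[OF Adiag_carrier zero_carrier_mat Bf_carrier[OF assms(1,3)] Bf_carrier[OF assms(2,4)]
          anticomm_Bf[OF assms(1,3)]])
  thus ?thesis unfolding Good_def .
qed

lemma Adiag_fb: "Adiag s t a = four_block_mat (a \<cdot>\<^sub>m 1\<^sub>m s) (0\<^sub>m s t) (0\<^sub>m t s) ((- a) \<cdot>\<^sub>m 1\<^sub>m t)"
  unfolding Adiag_def dmat_def by (intro eq_matI, auto)

lemma good_conj:
  assumes X: "X \<in> carrier_mat s t" and Y: "Y \<in> carrier_mat t s"
    and G1: "G1 \<in> carrier_mat s s" and G1': "G1' \<in> carrier_mat s s" and g1: "G1 * G1' = 1\<^sub>m s" "G1' * G1 = 1\<^sub>m s"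
    and G2: "G2 \<in> carrier_mat t t" and G2': "G2' \<in> carrier_mat t t" and g2: "G2 * G2' = 1\<^sub>m t" "G2' * G2 = 1\<^sub>m t"
    and g: "Good s t a X Y"
  shows "Good s t a (G1 * X * G2') (G2 * Y * G1')"
proof -
  define P where "P = four_block_mat G1 (0\<^sub>m s t) (0\<^sub>m t s) G2"
  define Q where "Q = four_block_mat G1' (0\<^sub>m s t) (0\<^sub>m t s) G2'"
  have Pc: "P \<in> carrier_mat (s+t) (s+t)" unfolding P_def using G1 G2 by simp
  have Qc: "Q \<in> carrier_mat (s+t) (s+t)" unfolding Q_def using G1' G2' by simp
  have PQ: "P * Q = 1\<^sub>m (s+t)" unfolding P_def Q_def
    by (subst mult_four_block_mat[OF G1 _ _ G2 G1' _ _ G2'], insert G1 G2 G1' G2' g1 g2, auto)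
  have QP: "Q * P = 1\<^sub>m (s+t)" unfolding P_def Q_def
    by (subst mult_four_block_mat[OF G1' _ _ G2' G1 _ _ G2], insert G1 G2 G1' G2' g1 g2, auto)
  have s1: "(a \<cdot>\<^sub>m 1\<^sub>m s) \<in> carrier_mat s s" "((- a) \<cdot>\<^sub>m 1\<^sub>m t) \<in> carrier_mat t t" by auto
  have PA: "P * Adiag s t a = four_block_mat (a \<cdot>\<^sub>m G1) (0\<^sub>m s t) (0\<^sub>m t s) ((- a) \<cdot>\<^sub>m G2)"
  proof -
    have "P * Adiag s t a = four_block_mat (G1 * (a \<cdot>\<^sub>m 1\<^sub>m s) + 0\<^sub>m s t * 0\<^sub>m t s) (G1 * 0\<^sub>m s t + 0\<^sub>m s t * ((- a) \<cdot>\<^sub>m 1\<^sub>m t))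
       (0\<^sub>m t s * (a \<cdot>\<^sub>m 1\<^sub>m s) + G2 * 0\<^sub>m t s) (0\<^sub>m t s * 0\<^sub>m s t + G2 * ((- a) \<cdot>\<^sub>m 1\<^sub>m t))"
      unfolding P_def Adiag_fb by (rule mult_four_block_mat[OF G1 _ _ G2 s1(1) _ _ s1(2)], auto)
    also have "\<dots> = four_block_mat (a \<cdot>\<^sub>m G1) (0\<^sub>m s t) (0\<^sub>m t s) ((- a) \<cdot>\<^sub>m G2)"
      using G1 G2 by (intro cong_four_block_mat, auto simp: mult_smult_distrib[of _ s s _ s] mult_smult_distrib[of _ t t _ t])
    finally show ?thesis .
  qed
  have s2: "a \<cdot>\<^sub>m G1 \<in> carrier_mat s s" "(- a) \<cdot>\<^sub>m G2 \<in> carrier_mat t t" using G1 G2 by auto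
  have PAQ: "P * Adiag s t a * Q = Adiag s t a"
  proof -
    have "P * Adiag s t a * Q = four_block_mat (a \<cdot>\<^sub>m G1 * G1' + 0\<^sub>m s t * 0\<^sub>m t s) (a \<cdot>\<^sub>m G1 * 0\<^sub>m s t + 0\<^sub>m s t * G2')
       (0\<^sub>m t s * G1' + (- a) \<cdot>\<^sub>m G2 * 0\<^sub>m t s) (0\<^sub>m t s * 0\<^sub>m s t + (- a) \<cdot>\<^sub>m G2 * G2')"
      unfolding PA Q_def by (rule mult_four_block_mat[OF s2(1) _ _ s2(2) G1' _ _ G2'], auto)
    also have "\<dots> = Adiag s t a" unfolding Adiag_fb
      using G1 G2 G1' G2' g1 g2 by (intro cong_four_block_mat, auto simp: mult_smult_assoc_mat[of _ s s _ s] mult_smult_assoc_mat[of _ t t _ t])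
    finally show ?thesis .
  qed
  have z: "0\<^sub>m s s \<in> carrier_mat s s" "0\<^sub>m t t \<in> carrier_mat t t" by auto
  have PB: "P * Bf s t X Y = four_block_mat (0\<^sub>m s s) (G1 * X) (G2 * Y) (0\<^sub>m t t)"
  proof -
    have "P * Bf s t X Y = four_block_mat (G1 * 0\<^sub>m s s + 0\<^sub>m s t * Y) (G1 * X + 0\<^sub>m s t * 0\<^sub>m t t)
       (0\<^sub>m t s * 0\<^sub>m s s + G2 * Y) (0\<^sub>m t s * X + G2 * 0\<^sub>m t t)"
      unfolding P_def Bf_def by (rule mult_four_block_mat[OF G1 _ _ G2 z(1) X Y z(2)], auto)
    also have "\<dots> = four_block_mat (0\<^sub>m s s) (G1 * X) (G2 * Y) (0\<^sub>m t t)"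
      using G1 G2 X Y by (intro cong_four_block_mat, auto)
    finally show ?thesis .
  qed
  have s3: "G1 * X \<in> carrier_mat s t" "G2 * Y \<in> carrier_mat t s" using G1 G2 X Y by auto
  have PBQ: "P * Bf s t X Y * Q = Bf s t (G1 * X * G2') (G2 * Y * G1')"
  proof -
    have "P * Bf s t X Y * Q = four_block_mat (0\<^sub>m s s * G1' + G1 * X * 0\<^sub>m t s) (0\<^sub>m s s * 0\<^sub>m s t + G1 * X * G2')
       (G2 * Y * G1' + 0\<^sub>m t t * 0\<^sub>m t s) (G2 * Y * 0\<^sub>m s t + 0\<^sub>m t t * G2')"
      unfolding PB Q_def by (rule mult_four_block_mat[OF z(1) s3 z(2) G1' _ _ G2'], auto)
    also have "\<dots> = Bf s t (G1 * X * G2') (G2 * Y * G1')" unfolding Bf_def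
      using G1 G2 X Y G1' G2' by (intro cong_four_block_mat, auto)
    finally show ?thesis .
  qed
  have "(P * fst (Adiag s t a, Bf s t X Y) * Q, P * snd (Adiag s t a, Bf s t X Y) * Q)
     \<in> zariski_closure_in (s+t) (SSet s t)"
    by (rule zc_conj[OF g[unfolded Good_def] Pc Qc PQ QP SSet_sub], rule SSet_conj[OF _ Pc Qc PQ QP])
  thus ?thesis unfolding Good_def fst_conv snd_conv PAQ PBQ .
qed


lemma sig_tau:
  fixes s t :: nat
  defines "p \<equiv> min s t" and "m \<equiv> max s t - min s t"
  defines "\<sigma> \<equiv> \<lambda>k. if k < 2*p then (if even k then k div 2 else s + k div 2)
                    else (if k - p < s then k - p else s + (k - p))"
  defines "\<tau> \<equiv> \<lambda>i. if i < s then (if i < p then 2*i else i + p)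
                    else (if i - s < p then 2*(i - s) + 1 else i - s + p)"
  shows "\<forall>k<s+t. \<sigma> k < s+t \<and> \<tau> (\<sigma> k) = k" "\<forall>i<s+t. \<tau> i < s+t \<and> \<sigma> (\<tau> i) = i"
proof -
  show "\<forall>k<s+t. \<sigma> k < s+t \<and> \<tau> (\<sigma> k) = k"
  proof (intro allI impI)
    fix k assume k: "k < s + t"
    show "\<sigma> k < s+t \<and> \<tau> (\<sigma> k) = k"
    proof (cases "k < 2*p")
      case True
      then show ?thesis unfolding \<sigma>_def \<tau>_def p_def
        by (cases "even k", auto elim!: evenE oddE simp: min_def split: if_splits)
    next
      case False
      then show ?thesis using k unfolding \<sigma>_def \<tau>_def p_def
        by (auto simp: min_def split: if_splits)
    qed
  qed
  show "\<forall>i<s+t. \<tau> i < s+t \<and> \<sigma> (\<tau> i) = i"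
  proof (intro allI impI)
    fix i assume i: "i < s + t"
    show "\<tau> i < s+t \<and> \<sigma> (\<tau> i) = i"
      using i unfolding \<sigma>_def \<tau>_def p_def
      by (auto simp: min_def split: if_splits)
  qed
qed

lemma gen_diag_dmat:
  "gen_diag p m 0 \<alpha> = dmat (2*p+m) (\<lambda>k. if k < 2*p then (if even k then \<alpha> (k div 2) else - \<alpha> (k div 2))
      else \<alpha> (k - p))"
  unfolding gen_diag_def dmat_def by (intro eq_matI, auto)

lemma gd_sigma:
  fixes s t p :: nat and \<beta> \<alpha> dz :: "nat \<Rightarrow> complex" and \<sigma> :: "nat \<Rightarrow> nat"
  assumes p_def: "p = min s t"
  assumes \<sigma>_def: "\<sigma> = (\<lambda>k. if k < 2*p then (if even k then k div 2 else s + k div 2)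
                    else (if k - p < s then k - p else s + (k - p)))"
  assumes \<alpha>_def: "\<alpha> = (\<lambda>j. if j < s then \<beta> j else - \<beta> j)"
  assumes dz_def: "dz = (\<lambda>i. if i < s then \<beta> i else - \<beta> (i - s))"
  shows "(if k < 2*p then (if even k then \<alpha> (k div 2) else - \<alpha> (k div 2)) else \<alpha> (k - p)) = dz (\<sigma> k)"
proof (cases "k < 2*p")
  case True
  have "k div 2 < p" using True by auto
  hence "k div 2 < s" unfolding p_def by simp
  then show ?thesis using True unfolding \<sigma>_def \<alpha>_def dz_def by auto
next
  case False
  then show ?thesis unfolding \<sigma>_def \<alpha>_def dz_def by auto
qed

lemma generic_beta:
  fixes a z :: complex and N :: nat
  assumes zB: "z \<notin> {0} \<union> (\<lambda>j. - a / of_nat (Suc j)) ` {..<N} \<union> (\<lambda>k. - (2*a) / of_nat (Suc (Suc k))) ` {..<2*N}"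
  shows "\<forall>i<N. a + z * of_nat (Suc i) \<noteq> 0"
    "\<forall>i<N. \<forall>j<N. i \<noteq> j \<longrightarrow> a + z * of_nat (Suc i) \<noteq> a + z * of_nat (Suc j) \<and>
        a + z * of_nat (Suc i) \<noteq> - (a + z * of_nat (Suc j))"
proof -
  show "\<forall>i<N. a + z * of_nat (Suc i) \<noteq> 0"
  proof (intro allI impI notI)
    fix i assume i: "i < N" and e: "a + z * of_nat (Suc i) = 0"
    have nz: "(of_nat (Suc i) :: complex) \<noteq> 0" by (metis of_nat_eq_0_iff nat.distinct(1))
    have "z * of_nat (Suc i) = - a" using e by (simp only: add_eq_0_iff)
    hence "z = - a / of_nat (Suc i)" using nz by (metis nonzero_mult_div_cancel_right)
    thus False using zB i by auto
  qed
  show "\<forall>i<N. \<forall>j<N. i \<noteq> j \<longrightarrow> a + z * of_nat (Suc i) \<noteq> a + z * of_nat (Suc j) \<and>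
        a + z * of_nat (Suc i) \<noteq> - (a + z * of_nat (Suc j))"
  proof (intro allI impI conjI notI)
    fix i j assume i: "i < N" and j: "j < N" and ij: "i \<noteq> j"
      and e: "a + z * of_nat (Suc i) = a + z * of_nat (Suc j)"
    have "z * (of_nat (Suc i) - of_nat (Suc j)) = 0" using e by (simp add: algebra_simps)
    moreover have "(of_nat (Suc i) - of_nat (Suc j) :: complex) \<noteq> 0" using ij by simp
    ultimately have "z = 0" by simp
    thus False using zB by auto
  next
    fix i j assume i: "i < N" and j: "j < N" and ij: "i \<noteq> j"
      and e: "a + z * of_nat (Suc i) = - (a + z * of_nat (Suc j))"
    have e2: "2 * a + z * of_nat (Suc (Suc (i + j))) = 0" using e by (simp add: algebra_simps)
    have nz: "(of_nat (Suc (Suc (i + j))) :: complex) \<noteq> 0" by (metis of_nat_eq_0_iff nat.distinct(1))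
    have "z * of_nat (Suc (Suc (i + j))) = - (2 * a)" using e2 by (simp only: add_eq_0_iff)
    hence "z = - (2 * a) / of_nat (Suc (Suc (i + j)))" using nz by (metis nonzero_mult_div_cancel_right)
    moreover have "i + j < 2 * N" using i j by simp
    ultimately show False using zB by blast
  qed
qed

lemma good_sparse:
  fixes s t :: nat and a :: complex and x y :: "nat \<Rightarrow> complex"
  shows "Good s t a (mat s t (\<lambda>(i,j). if i = j then x i else 0)) (mat t s (\<lambda>(i,j). if i = j then y i else 0))"
proof -
  let ?n = "s + t"
  define p where "p = min s t"
  define m where "m = max s t - min s t"
  have nn: "2*p+m = ?n" unfolding p_def m_def by (simp add: min_def max_def)
  define \<sigma> where "\<sigma> = (\<lambda>k. if k < 2*p then (if even k then k div 2 else s + k div 2)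
                    else (if k - p < s then k - p else s + (k - p)))"
  define \<tau> where "\<tau> = (\<lambda>i. if i < s then (if i < p then 2*i else i + p)
                    else (if i - s < p then 2*(i - s) + 1 else i - s + p))"
  have st: "\<forall>k<?n. \<sigma> k < ?n \<and> \<tau> (\<sigma> k) = k" "\<forall>i<?n. \<tau> i < ?n \<and> \<sigma> (\<tau> i) = i"
    using sig_tau[of s t] unfolding \<sigma>_def \<tau>_def p_def by auto
  define X' where "X' = mat s t (\<lambda>(i,j). if i = j then x i else 0)"
  define Y' where "Y' = mat t s (\<lambda>(i,j). if i = j then y i else 0)"
  have X'c: "X' \<in> carrier_mat s t" and Y'c: "Y' \<in> carrier_mat t s" unfolding X'_def Y'_def by auto
  define Bs where "Bs = Bf s t X' Y'"
  have Bsc: "Bs \<in> carrier_mat ?n ?n" unfolding Bs_def using X'c Y'c by simp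
  define E where "E = dmat ?n (\<lambda>i. if i < s then of_nat (Suc i) else - of_nat (Suc (i - s)))"
  have Ec: "E \<in> carrier_mat ?n ?n" unfolding E_def by simp
  define Bd where "Bd = {0} \<union> (\<lambda>j. - a / of_nat (Suc j)) ` {..<?n} \<union> (\<lambda>k. - (2*a) / of_nat (Suc (Suc k))) ` {..<2*?n}"
  have finBd: "finite Bd" unfolding Bd_def by simp
  have inS: "(Adiag s t a + z \<cdot>\<^sub>m E, Bs) \<in> SSet s t" if zB: "z \<notin> Bd" for z
  proof -
    define \<beta> where "\<beta> = (\<lambda>j. a + z * of_nat (Suc j))"
    define \<alpha> where "\<alpha> = (\<lambda>j. if j < s then \<beta> j else - \<beta> j)"
    define dz where "dz = (\<lambda>i. if i < s then \<beta> i else - \<beta> (i - s))"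
    have Az: "Adiag s t a + z \<cdot>\<^sub>m E = dmat ?n dz"
      unfolding Adiag_def E_def dmat_def dz_def \<beta>_def by (intro eq_matI, auto simp: algebra_simps)
    have gb: "\<forall>i<?n. \<beta> i \<noteq> 0" "\<forall>i<?n. \<forall>j<?n. i \<noteq> j \<longrightarrow> \<beta> i \<noteq> \<beta> j \<and> \<beta> i \<noteq> - \<beta> j"
      using generic_beta[of z a ?n] zB unfolding Bd_def \<beta>_def by auto
    have gen: "generic_params p m \<alpha>"
      unfolding generic_params_def
    proof (intro conjI allI impI)
      fix i assume "i < p + m"
      hence i: "i < ?n" unfolding p_def m_def by (simp add: min_def max_def split: if_splits)
      show "\<alpha> i \<noteq> 0" using gb(1) i unfolding \<alpha>_def by auto
    next
      fix i j assume "i < p + m" "j < p + m" and ij: "i \<noteq> j"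
      hence i: "i < ?n" and j: "j < ?n" unfolding p_def m_def by (simp_all add: min_def max_def split: if_splits)
      have b1: "\<beta> i \<noteq> \<beta> j" "\<beta> i \<noteq> - \<beta> j" using gb(2) i j ij by auto
      have b2: "- \<beta> i \<noteq> \<beta> j" using b1(2) by (metis minus_minus)
      have b3: "- \<beta> i \<noteq> - \<beta> j" using b1(1) by simp
      show "\<alpha> i \<noteq> \<alpha> j" "\<alpha> i \<noteq> - \<alpha> j" unfolding \<alpha>_def using b1 b2 b3 by auto
    qed
    have G: "gen_diag p m 0 \<alpha> = dmat ?n (\<lambda>k. dz (\<sigma> k))"
    proof -
      have "gen_diag p m 0 \<alpha> = dmat ?n (\<lambda>k. if k < 2*p then (if even k then \<alpha> (k div 2) else - \<alpha> (k div 2))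
          else \<alpha> (k - p))" using gen_diag_dmat[of p m \<alpha>] unfolding nn .
      also have "\<dots> = dmat ?n (\<lambda>k. dz (\<sigma> k))"
        by (rule arg_cong[where f = "dmat ?n"], rule ext, rule gd_sigma[OF p_def \<sigma>_def \<alpha>_def dz_def])
      finally show ?thesis .
    qed
    define P where "P = pmat ?n \<sigma>"
    define Q where "Q = pmat' ?n \<sigma>"
    have Pc: "P \<in> carrier_mat ?n ?n" and Qc: "Q \<in> carrier_mat ?n ?n" unfolding P_def Q_def pmat_def pmat'_def by auto
    note pp = pmat_props[OF st]
    have PQ: "P * Q = 1\<^sub>m ?n" and QP: "Q * P = 1\<^sub>m ?n" unfolding P_def Q_def using pp by auto
    have AzG: "dmat ?n dz = P * gen_diag p m 0 \<alpha> * Q"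
    proof -
      have "P * gen_diag p m 0 \<alpha> * Q = dmat ?n (\<lambda>i. dz (\<sigma> (\<tau> i)))" unfolding G P_def Q_def by (rule pp(3))
      also have "\<dots> = dmat ?n dz" unfolding dmat_def using st by (intro eq_matI, auto)
      finally show ?thesis by simp
    qed
    have Gc: "gen_diag p m 0 \<alpha> \<in> carrier_mat ?n ?n" unfolding G by simp
    have ac: "(dmat ?n dz, Bs) \<in> anticomm_var ?n"
    proof (subst anticomm_dmat_iff[OF Bsc], intro allI impI)
      fix i j assume i: "i < ?n" and j: "j < ?n"
      show "(dz i + dz j) * Bs $$ (i,j) = 0"
        unfolding Bs_def Bf_index[OF X'c Y'c i j] using i j
        by (auto simp: X'_def Y'_def dz_def)
    qed
    define B'' where "B'' = Q * Bs * P"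
    have B''c: "B'' \<in> carrier_mat ?n ?n" unfolding B''_def using Qc Bsc Pc by simp
    have QAP: "Q * dmat ?n dz * P = gen_diag p m 0 \<alpha>"
    proof -
      have "Q * dmat ?n dz * P = (Q * P) * gen_diag p m 0 \<alpha> * (Q * P)" unfolding AzG
        using Qc Pc Gc by (simp add: assoc_mult_mat[of _ ?n ?n _ ?n _ ?n])
      thus ?thesis using QP Gc by simp
    qed
    have ac2: "(gen_diag p m 0 \<alpha>, B'') \<in> anticomm_var ?n"
      using conj_anticomm[OF Qc Pc PQ ac] unfolding QAP B''_def .
    have PBQ: "P * B'' * Q = Bs"
    proof -
      have "P * B'' * Q = (P * Q) * Bs * (P * Q)" unfolding B''_def
        using Qc Pc Bsc by (simp add: assoc_mult_mat[of _ ?n ?n _ ?n _ ?n])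
      thus ?thesis using PQ Bsc by simp
    qed
    have orb: "(Adiag s t a + z \<cdot>\<^sub>m E, Bs) \<in> gl_orbit ?n (gen_diag p m 0 \<alpha>, B'')"
      unfolding gl_orbit_def Az
    proof (rule CollectI, rule exI[of _ P], rule exI[of _ Q], intro conjI)
      show "(dmat ?n dz, Bs) = (P * fst (gen_diag p m 0 \<alpha>, B'') * Q, P * snd (gen_diag p m 0 \<alpha>, B'') * Q)"
        using AzG PBQ by simp
    qed (fact Pc Qc PQ QP)+
    have mem: "gl_orbit ?n (gen_diag p m 0 \<alpha>, B'') \<in> {gl_orbit ?n (gen_diag p m 0 a, B) | a B.
        generic_params p m a \<and> (gen_diag p m 0 a, B) \<in> anticomm_var ?n}"
      by (rule CollectI, rule exI[of _ \<alpha>], rule exI[of _ B''], intro conjI refl gen ac2)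
    show ?thesis using UnionI[OF mem orb] unfolding SSet_def p_def m_def .
  qed
  have "{z. z \<notin> Bd} \<subseteq> {z. (Adiag s t a + z \<cdot>\<^sub>m E, Bs + z \<cdot>\<^sub>m 0\<^sub>m ?n ?n) \<in> zariski_closure_in ?n (SSet s t)}"
  proof
    fix z assume "z \<in> {z. z \<notin> Bd}"
    hence "(Adiag s t a + z \<cdot>\<^sub>m E, Bs) \<in> zariski_closure_in ?n (SSet s t)"
      using S_sub_closure[OF SSet_sub inS] by simp
    moreover have "Bs + z \<cdot>\<^sub>m 0\<^sub>m ?n ?n = Bs" using Bsc by (intro eq_matI, auto)
    ultimately show "z \<in> {z. (Adiag s t a + z \<cdot>\<^sub>m E, Bs + z \<cdot>\<^sub>m 0\<^sub>m ?n ?n) \<in> zariski_closure_in ?n (SSet s t)}"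
      by simp
  qed
  hence "infinite {z. (Adiag s t a + z \<cdot>\<^sub>m E, Bs + z \<cdot>\<^sub>m 0\<^sub>m ?n ?n) \<in> zariski_closure_in ?n (SSet s t)}"
    by (rule infinite_compl[OF finBd])
  hence "(Adiag s t a, Bs) \<in> zariski_closure_in ?n (SSet s t)"
    by (rule zc_curve[OF Adiag_carrier Ec Bsc zero_carrier_mat anticomm_Bf[OF X'c Y'c, folded Bs_def]])
  thus ?thesis unfolding Good_def Bs_def X'_def Y'_def .
qed


lemma rank_rows:
  fixes M :: "complex mat"
  assumes "finite I" "M \<in> carrier_mat n n" "\<forall>i<n. \<forall>j<n. i \<notin> I \<longrightarrow> M $$ (i,j) = 0"
  shows "vec_space.rank n M \<le> card I"
  using assms
proof (induction I arbitrary: M rule: finite_induct)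
  case empty
  have "M = 0\<^sub>m n n" using empty by (intro eq_matI, auto)
  then show ?case using vec_space.rank_0I by simp
next
  case (insert i I)
  define M1 where "M1 = mat n n (\<lambda>(r,c). if r = i then M $$ (r,c) else 0)"
  define M2 where "M2 = mat n n (\<lambda>(r,c). if r = i then 0 else M $$ (r,c))"
  have M1c: "M1 \<in> carrier_mat n n" and M2c: "M2 \<in> carrier_mat n n" unfolding M1_def M2_def by auto
  have MM: "M = M1 + M2" unfolding M1_def M2_def using insert by (intro eq_matI, auto)
  have r1: "vec_space.rank n M1 \<le> 1"
    by (rule vec_space.rank_le_1_product_entries[OF M1c, of "\<lambda>r. if r = i then 1 else 0" "\<lambda>c. M $$ (i,c)"],
        auto simp: M1_def)
  have r2: "vec_space.rank n M2 \<le> card I"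
    by (rule insert.IH[OF M2c], insert insert.prems, auto simp: M2_def)
  have "vec_space.rank n M \<le> vec_space.rank n M1 + vec_space.rank n M2"
    unfolding MM by (rule vec_space.rank_subadditive[OF M1c M2c])
  also have "\<dots> \<le> 1 + card I" using r1 r2 by simp
  finally show ?case using insert by simp
qed

lemma rank_cols:
  fixes M :: "complex mat"
  assumes "finite J" "M \<in> carrier_mat n n" "\<forall>i<n. \<forall>j<n. j \<notin> J \<longrightarrow> M $$ (i,j) = 0"
  shows "vec_space.rank n M \<le> card J"
  using assms
proof (induction J arbitrary: M rule: finite_induct)
  case empty
  have "M = 0\<^sub>m n n" using empty by (intro eq_matI, auto)
  then show ?case using vec_space.rank_0I by simp
next
  case (insert j J)
  define M1 where "M1 = mat n n (\<lambda>(r,c). if c = j then M $$ (r,c) else 0)"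
  define M2 where "M2 = mat n n (\<lambda>(r,c). if c = j then 0 else M $$ (r,c))"
  have M1c: "M1 \<in> carrier_mat n n" and M2c: "M2 \<in> carrier_mat n n" unfolding M1_def M2_def by auto
  have MM: "M = M1 + M2" unfolding M1_def M2_def using insert by (intro eq_matI, auto)
  have r1: "vec_space.rank n M1 \<le> 1"
    by (rule vec_space.rank_le_1_product_entries[OF M1c, of "\<lambda>r. M $$ (r,j)" "\<lambda>c. if c = j then 1 else 0"],
        auto simp: M1_def)
  have r2: "vec_space.rank n M2 \<le> card J"
    by (rule insert.IH[OF M2c], insert insert.prems, auto simp: M2_def)
  have "vec_space.rank n M \<le> vec_space.rank n M1 + vec_space.rank n M2"
    unfolding MM by (rule vec_space.rank_subadditive[OF M1c M2c])
  also have "\<dots> \<le> 1 + card J" using r1 r2 by simp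
  finally show ?case using insert by simp
qed

lemma rank_block:
  fixes B :: "complex mat"
  assumes B: "B \<in> carrier_mat (s+t) (s+t)"
    and blk: "\<forall>i<s+t. \<forall>j<s+t. (i < s \<longleftrightarrow> j < s) \<longrightarrow> B $$ (i,j) = 0"
  shows "vec_space.rank (s+t) B \<le> 2 * min s t"
proof -
  let ?n = "s + t"
  define B1 where "B1 = mat ?n ?n (\<lambda>(r,c). if r < s then B $$ (r,c) else 0)"
  define B2 where "B2 = mat ?n ?n (\<lambda>(r,c). if r < s then 0 else B $$ (r,c))"
  have B1c: "B1 \<in> carrier_mat ?n ?n" and B2c: "B2 \<in> carrier_mat ?n ?n" unfolding B1_def B2_def by auto
  have BB: "B = B1 + B2" unfolding B1_def B2_def using B by (intro eq_matI, auto)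
  have a1: "vec_space.rank ?n B1 \<le> card {0..<s}"
    by (rule rank_rows[OF _ B1c], auto simp: B1_def)
  have a2: "vec_space.rank ?n B1 \<le> card {s..<?n}"
    by (rule rank_cols[OF _ B1c], insert blk, auto simp: B1_def)
  have b1: "vec_space.rank ?n B2 \<le> card {s..<?n}"
    by (rule rank_rows[OF _ B2c], auto simp: B2_def)
  have b2: "vec_space.rank ?n B2 \<le> card {0..<s}"
    by (rule rank_cols[OF _ B2c], insert blk, auto simp: B2_def)
  have "vec_space.rank ?n B \<le> vec_space.rank ?n B1 + vec_space.rank ?n B2"
    unfolding BB by (rule vec_space.rank_subadditive[OF B1c B2c])
  also have "\<dots> \<le> min s t + min s t" using a1 a2 b1 b2 by simp
  finally show ?thesis by simp
qed


theorem lemma4p1: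
  fixes a :: complex and s t n :: nat and A B :: "complex mat"
  assumes "a \<noteq> 0"
    and "n = s + t" and "n \<ge> 1"
    and "A = mat n n (\<lambda>(i,j). if i = j then (if i < s then a else - a) else 0)"
    and "B \<in> carrier_mat n n"
    and "A * B + B * A = 0\<^sub>m n n"
  shows "vec_space.rank n B \<le> 2 * min s t \<and>
         (A, B) \<in> Zpmr (min s t) (max s t - min s t) 0"
proof -
  have A_eq: "A = Adiag s t a" unfolding assms(4) Adiag_def dmat_def assms(2) by (intro eq_matI, auto)
  have Bc: "B \<in> carrier_mat (s+t) (s+t)" using assms(5) assms(2) by simp
  have ac: "(Adiag s t a, B) \<in> anticomm_var (s+t)"
    using assms(5,6) A_eq assms(2) Adiag_carrier[of s t a] unfolding anticomm_var_def by simp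
  hence ac2: "\<forall>i<s+t. \<forall>j<s+t. ((if i < s then a else - a) + (if j < s then a else - a)) * B $$ (i,j) = 0"
    using anticomm_dmat_iff[OF Bc] unfolding Adiag_def by simp
  have blk: "\<forall>i<s+t. \<forall>j<s+t. (i < s \<longleftrightarrow> j < s) \<longrightarrow> B $$ (i,j) = 0"
  proof (intro allI impI)
    fix i j assume i: "i < s + t" and j: "j < s + t" and same: "i < s \<longleftrightarrow> j < s"
    have "(if i < s then a else - a) + (if j < s then a else - a) \<noteq> 0" using same assms(1) by auto
    thus "B $$ (i,j) = 0" using ac2 i j by auto
  qed
  have rank: "vec_space.rank n B \<le> 2 * min s t" using rank_block[OF Bc blk] assms(2) by simp
  define X where "X = mat s t (\<lambda>(i,j). B $$ (i, j + s))"
  define Y where "Y = mat t s (\<lambda>(i,j). B $$ (i + s, j))"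
  have Xc: "X \<in> carrier_mat s t" and Yc: "Y \<in> carrier_mat t s" unfolding X_def Y_def by auto
  have BXY: "B = Bf s t X Y"
  proof (rule eq_matI)
    fix i j assume i: "i < dim_row (Bf s t X Y)" and j: "j < dim_col (Bf s t X Y)"
    have bc: "Bf s t X Y \<in> carrier_mat (s+t) (s+t)" by (rule Bf_carrier[OF Xc Yc])
    have i': "i < s + t" using i bc by simp
    have j': "j < s + t" using j bc by simp
    show "B $$ (i,j) = Bf s t X Y $$ (i,j)"
      unfolding Bf_index[OF Xc Yc i' j'] using blk i' j' by (auto simp: X_def Y_def)
  qed (insert Bc Bf_carrier[OF Xc Yc], auto)
  have good: "Good s t a X Y"
  proof (cases "t \<le> s")
    case True
    then obtain u where su: "s = t + u" using le_iff_add by blast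
    have "Good (t+u) t a X Y"
    proof (rule ABS[where Good = "Good (t+u) t a" and t = t and u = u])
      fix X' Y' G1 G1' G2 G2' :: "complex mat"
      assume "X' \<in> carrier_mat (t+u) t" "Y' \<in> carrier_mat t (t+u)"
        "G1 \<in> carrier_mat (t+u) (t+u)" "G1' \<in> carrier_mat (t+u) (t+u)"
        "G1 * G1' = 1\<^sub>m (t+u)" "G1' * G1 = 1\<^sub>m (t+u)"
        "G2 \<in> carrier_mat t t" "G2' \<in> carrier_mat t t" "G2 * G2' = 1\<^sub>m t" "G2' * G2 = 1\<^sub>m t"
        "Good (t+u) t a X' Y'"
      thus "Good (t+u) t a (G1 * X' * G2') (G2 * Y' * G1')" by (rule good_conj)
    next
      fix x y :: "nat \<Rightarrow> complex"
      show "Good (t+u) t a (mat (t+u) t (\<lambda>(i,j). if i = j then x i else 0))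
                           (mat t (t+u) (\<lambda>(i,j). if i = j then y i else 0))" by (rule good_sparse)
    next
      fix X0 X1 Y0 Y1 :: "complex mat"
      assume "X0 \<in> carrier_mat (t+u) t" "X1 \<in> carrier_mat (t+u) t"
        "Y0 \<in> carrier_mat t (t+u)" "Y1 \<in> carrier_mat t (t+u)"
        "infinite {z. Good (t+u) t a (X0 + z \<cdot>\<^sub>m X1) (Y0 + z \<cdot>\<^sub>m Y1)}"
      thus "Good (t+u) t a X0 Y0" by (rule good_line)
    next
      show "X \<in> carrier_mat (t+u) t" using Xc su by simp
      show "Y \<in> carrier_mat t (t+u)" using Yc su by simp
    qed
    thus ?thesis using su by simp
  next
    case False
    hence "s \<le> t" by simp
    then obtain u where tu: "t = s + u" using le_iff_add by blast
    have "(\<lambda>Y' X'. Good s (s+u) a X' Y') Y X"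
    proof (rule ABS[where Good = "\<lambda>Y' X'. Good s (s+u) a X' Y'" and t = s and u = u])
      fix X' Y' G1 G1' G2 G2' :: "complex mat"
      assume h: "X' \<in> carrier_mat (s+u) s" "Y' \<in> carrier_mat s (s+u)"
        "G1 \<in> carrier_mat (s+u) (s+u)" "G1' \<in> carrier_mat (s+u) (s+u)"
        "G1 * G1' = 1\<^sub>m (s+u)" "G1' * G1 = 1\<^sub>m (s+u)"
        "G2 \<in> carrier_mat s s" "G2' \<in> carrier_mat s s" "G2 * G2' = 1\<^sub>m s" "G2' * G2 = 1\<^sub>m s"
        "Good s (s+u) a Y' X'"
      have "Good s (s+u) a (G2 * Y' * G1') (G1 * X' * G2')"
        by (rule good_conj[OF h(2) h(1) h(7) h(8) h(9) h(10) h(3) h(4) h(5) h(6) h(11)])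
      thus "Good s (s+u) a (G2 * Y' * G1') (G1 * X' * G2')" .
    next
      fix x y :: "nat \<Rightarrow> complex"
      show "Good s (s+u) a (mat s (s+u) (\<lambda>(i,j). if i = j then y i else 0))
                           (mat (s+u) s (\<lambda>(i,j). if i = j then x i else 0))" by (rule good_sparse)
    next
      fix X0 X1 Y0 Y1 :: "complex mat"
      assume h: "X0 \<in> carrier_mat (s+u) s" "X1 \<in> carrier_mat (s+u) s"
        "Y0 \<in> carrier_mat s (s+u)" "Y1 \<in> carrier_mat s (s+u)"
        "infinite {z. Good s (s+u) a (Y0 + z \<cdot>\<^sub>m Y1) (X0 + z \<cdot>\<^sub>m X1)}"
      show "Good s (s+u) a Y0 X0" by (rule good_line[OF h(3) h(4) h(1) h(2) h(5)])
    next
      show "Y \<in> carrier_mat (s+u) s" using Yc tu by simp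
      show "X \<in> carrier_mat s (s+u)" using Xc tu by simp
    qed
    thus ?thesis using tu by simp
  qed
  have "(A, B) \<in> Zpmr (min s t) (max s t - min s t) 0"
    using good unfolding Zpmr_eq Good_def A_eq[symmetric] BXY[symmetric] assms(2) .
  thus ?thesis using rank by simp
qed

end
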